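(* Let $X$ be a finite-dimensional real Banach space and $Y$ a uniformly convex real Banach space such that $\mathrm{NA}(\mathcal F(X),Y)$ is dense in $\mathcal L(\mathcal F(X),Y)$. Then $\mathrm{DA}(X,Y)$ is dense in $\mathrm{Lip}_0(X,Y)$.
   Context: $\widetilde X=\{(x,y)\in X^2:x\neq y\}$. $\mathrm{Lip}_0(X,Y)$ is the Banach space of Lipschitz $f\colon X\to Y$ with $f(0)=0$ and norm $\|f\|=\sup_{(x,y)\in\widetilde X}\|f(x)-f(y)\|/\|x-y\|$. The Lipschitz-free space $\mathcal F(X)$ is the closed linear span of $\{\delta_x:x\in X\}$ in $\mathrm{Lip}_0(X,\mathbb R)^*$, $\delta_x(g)=g(x)$. $\mathcal L(Z,Y)$ is the space of bounded linear operators, and $\mathrm{NA}(Z,Y)$ the set of $T\in\mathcal L(Z,Y)$ with $\|Tz\|=\|T\|$ for some $z\in S_Z$. $\mathrm{DA}(X,Y)$ is the set of $f\in\mathrm{Lip}_0(X,Y)$ for which there exist $u\in S_X$, $z\in Y$ with $\|z\|=\|f\|$, and $(x_n,y_n)\in\widetilde X$ with $\frac{f(x_n)-f(y_n)}{\|x_n-y_n\|}\to z$ and $\frac{x_n-y_n}{\|x_n-y_n\|}\to u$. *)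

theory Defs
  imports "HOL-Analysis.Analysis"
begin

definition lip_norm :: "('a::real_normed_vector \<Rightarrow> 'c::real_normed_vector) \<Rightarrow> real" where
  "lip_norm f = (SUP p \<in> {(x, y). x \<noteq> y}. norm (f (fst p) - f (snd p)) / norm (fst p - snd p))"

definition Lip0 :: "('a::real_normed_vector \<Rightarrow> 'c::real_normed_vector) set" where
  "Lip0 = {f. f 0 = 0 \<and> (\<exists>C. C-lipschitz_on UNIV f)}"

definition dual_norm :: "(('a::real_normed_vector \<Rightarrow> real) \<Rightarrow> real) \<Rightarrow> real" where
  "dual_norm \<phi> = (SUP g \<in> {g \<in> (Lip0 :: ('a \<Rightarrow> real) set). lip_norm g \<le> 1}. \<bar>\<phi> g\<bar>)"

text \<open>Lip_0(X,R)^*: bounded linear functionals on Lip_0(X,R), represented extensionally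
  (value 0 outside Lip_0(X,R)).\<close>
definition Lip0_dual :: "(('a::real_normed_vector \<Rightarrow> real) \<Rightarrow> real) set" where
  "Lip0_dual = {\<phi>.
     (\<forall>g\<in>Lip0. \<forall>h\<in>Lip0. \<phi> (\<lambda>x. g x + h x) = \<phi> g + \<phi> h) \<and>
     (\<forall>c. \<forall>g\<in>Lip0. \<phi> (\<lambda>x. c * g x) = c * \<phi> g) \<and>
     (\<forall>g. g \<notin> Lip0 \<longrightarrow> \<phi> g = 0) \<and>
     (\<exists>K. \<forall>g\<in>Lip0. \<bar>\<phi> g\<bar> \<le> K * lip_norm g)}"

definition delta :: "'a::real_normed_vector \<Rightarrow> ('a \<Rightarrow> real) \<Rightarrow> real" where
  "delta x = (\<lambda>g. if g \<in> Lip0 then g x else 0)"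

definition delta_span :: "(('a::real_normed_vector \<Rightarrow> real) \<Rightarrow> real) set" where
  "delta_span = {\<phi>. \<exists>S c. finite S \<and> \<phi> = (\<lambda>g. \<Sum>x\<in>S. c x * delta x g)}"

definition free_space :: "(('a::real_normed_vector \<Rightarrow> real) \<Rightarrow> real) set" where
  "free_space = {\<phi> \<in> Lip0_dual.
      \<forall>\<epsilon>>0. \<exists>\<psi>\<in>delta_span. dual_norm (\<lambda>g. \<phi> g - \<psi> g) < \<epsilon>}"

text \<open>L(F(X),Y): bounded linear operators F(X) \<rightarrow> Y (only values on F(X) matter).\<close>
definition bounded_ops :: "((('a::real_normed_vector \<Rightarrow> real) \<Rightarrow> real) \<Rightarrow> 'b::real_normed_vector) set" where
  "bounded_ops = {T.
     (\<forall>\<phi>\<in>(free_space::(('a \<Rightarrow> real) \<Rightarrow> real) set). \<forall>\<psi>\<in>free_space.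
         T (\<lambda>g. \<phi> g + \<psi> g) = T \<phi> + T \<psi>) \<and>
     (\<forall>c. \<forall>\<phi>\<in>(free_space::(('a \<Rightarrow> real) \<Rightarrow> real) set). T (\<lambda>g. c * \<phi> g) = c *\<^sub>R T \<phi>) \<and>
     (\<exists>K. \<forall>\<phi>\<in>(free_space::(('a \<Rightarrow> real) \<Rightarrow> real) set). norm (T \<phi>) \<le> K * dual_norm \<phi>)}"

definition op_norm :: "((('a::real_normed_vector \<Rightarrow> real) \<Rightarrow> real) \<Rightarrow> 'b::real_normed_vector) \<Rightarrow> real" where
  "op_norm T = (SUP \<phi> \<in> {\<phi> \<in> (free_space::(('a \<Rightarrow> real) \<Rightarrow> real) set). dual_norm \<phi> \<le> 1}. norm (T \<phi>))"

definition norm_attaining :: "((('a::real_normed_vector \<Rightarrow> real) \<Rightarrow> real) \<Rightarrow> 'b::real_normed_vector) set" where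
  "norm_attaining = {T \<in> bounded_ops.
     \<exists>\<phi>\<in>(free_space::(('a \<Rightarrow> real) \<Rightarrow> real) set). dual_norm \<phi> = 1 \<and> norm (T \<phi>) = op_norm T}"

definition DA :: "('a::real_normed_vector \<Rightarrow> 'b::real_normed_vector) set" where
  "DA = {f \<in> Lip0. \<exists>u z xs ys. norm u = 1 \<and> norm z = lip_norm f \<and> (\<forall>n. xs n \<noteq> ys n) \<and>
      ((\<lambda>n. (1 / norm (xs n - ys n)) *\<^sub>R (f (xs n) - f (ys n))) \<longlonglongrightarrow> z) \<and>
      ((\<lambda>n. (1 / norm (xs n - ys n)) *\<^sub>R (xs n - ys n)) \<longlonglongrightarrow> u)}"

definition uniformly_convex :: "'b::real_normed_vector itself \<Rightarrow> bool" where
  "uniformly_convex _ \<longleftrightarrow> (\<forall>\<epsilon>>0. \<exists>\<delta>>0. \<forall>x y::'b. norm x = 1 \<longrightarrow> norm y = 1 \<longrightarrow>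
      norm (x - y) \<ge> \<epsilon> \<longrightarrow> norm ((1/2) *\<^sub>R (x + y)) \<le> 1 - \<delta>)"

end

theory Submission
  imports Defs
begin

lemma Lip0D:
  assumes "f \<in> Lip0"
  shows "f 0 = 0" "\<exists>C\<ge>0. \<forall>x y. norm (f x - f y) \<le> C * norm (x - y)"
proof -
  show "f 0 = 0" using assms by (simp add: Lip0_def)
  from assms obtain C where C: "C-lipschitz_on UNIV f" by (auto simp: Lip0_def)
  have "C \<ge> 0" using lipschitz_on_nonneg[OF C] .
  moreover have "\<forall>x y. norm (f x - f y) \<le> C * norm (x - y)"
    using lipschitz_onD[OF C] by (simp add: dist_norm)
  ultimately show "\<exists>C\<ge>0. \<forall>x y. norm (f x - f y) \<le> C * norm (x - y)" by blast
qed

lemma Lip0I: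
  assumes "f 0 = 0" "C \<ge> 0" "\<And>x y. norm (f x - f y) \<le> C * norm (x - y)"
  shows "f \<in> Lip0"
proof -
  have "C-lipschitz_on UNIV f"
    by (rule lipschitz_onI) (use assms in \<open>auto simp: dist_norm\<close>)
  then show ?thesis using assms(1) by (auto simp: Lip0_def)
qed

lemma lip_bdd:
  fixes f :: "'a::real_normed_vector \<Rightarrow> 'c::real_normed_vector"
  assumes C: "\<And>x y. norm (f x - f y) \<le> C * norm (x - y)"
  shows "bdd_above ((\<lambda>p. norm (f (fst p) - f (snd p)) / norm (fst p - snd p)) ` {(x, y). x \<noteq> y})"
proof (rule bdd_aboveI2)
  fix p :: "'a \<times> 'a" assume "p \<in> {(x, y). x \<noteq> y}"
  then have "norm (fst p - snd p) > 0" by auto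
  then show "norm (f (fst p) - f (snd p)) / norm (fst p - snd p) \<le> C"
    using C[of "fst p" "snd p"] by (simp add: pos_divide_le_eq)
qed

lemma lip_le:
  fixes f :: "'a::real_normed_vector \<Rightarrow> 'c::real_normed_vector"
  assumes nt: "\<exists>x::'a. x \<noteq> 0" and C: "\<And>x y. norm (f x - f y) \<le> C * norm (x - y)"
  shows "lip_norm f \<le> C"
  unfolding lip_norm_def
proof (rule cSUP_least)
  from nt obtain x::'a where "x \<noteq> 0" by blast
  then have "(x, 0) \<in> {(x, y). x \<noteq> y}" by auto
  then show "{(x, y). x \<noteq> y} \<noteq> ({} :: ('a\<times>'a) set)" by blast
next
  fix p :: "'a \<times> 'a" assume "p \<in> {(x, y). x \<noteq> y}"
  then have "norm (fst p - snd p) > 0" by auto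
  then show "norm (f (fst p) - f (snd p)) / norm (fst p - snd p) \<le> C"
    using C[of "fst p" "snd p"] by (simp add: pos_divide_le_eq)
qed

lemma lip_quot_le:
  fixes f :: "'a::real_normed_vector \<Rightarrow> 'c::real_normed_vector"
  assumes C: "\<And>x y. norm (f x - f y) \<le> C * norm (x - y)" and "x \<noteq> y"
  shows "norm (f x - f y) / norm (x - y) \<le> lip_norm f"
proof -
  have "(x, y) \<in> {(x, y). x \<noteq> y}" using assms by auto
  from cSUP_upper[OF this lip_bdd[OF C]] show ?thesis by (simp add: lip_norm_def)
qed

lemma lip_upper_gen:
  fixes f :: "'a::real_normed_vector \<Rightarrow> 'c::real_normed_vector"
  assumes C: "\<And>x y. norm (f x - f y) \<le> C * norm (x - y)"
  shows "norm (f x - f y) \<le> lip_norm f * norm (x - y)"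
proof (cases "x = y")
  case False
  then have "norm (x - y) > 0" by auto
  with lip_quot_le[OF C False] show ?thesis by (simp add: pos_divide_le_eq)
qed simp

lemma lip_upper:
  assumes "f \<in> Lip0"
  shows "norm (f x - f y) \<le> lip_norm f * norm (x - y)"
  using Lip0D(2)[OF assms] lip_upper_gen by blast

lemma lip_nonneg:
  fixes f :: "'a::real_normed_vector \<Rightarrow> 'c::real_normed_vector"
  assumes nt: "\<exists>x::'a. x \<noteq> 0" and C: "\<And>x y. norm (f x - f y) \<le> C * norm (x - y)"
  shows "lip_norm f \<ge> 0"
proof -
  from nt obtain x::'a where x: "x \<noteq> 0" by blast
  have "0 \<le> norm (f x - f 0) / norm (x - 0)" by simp
  also have "\<dots> \<le> lip_norm f" using lip_quot_le[OF C x] .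
  finally show ?thesis .
qed

lemma zero_Lip0: "(\<lambda>x. 0) \<in> Lip0"
  by (rule Lip0I[where C=0]) auto

lemma Lip0_add: "g \<in> Lip0 \<Longrightarrow> h \<in> Lip0 \<Longrightarrow> (\<lambda>x. g x + h x) \<in> Lip0"
proof -
  assume g: "g \<in> Lip0" and h: "h \<in> Lip0"
  obtain C1 where C1: "C1 \<ge> 0" "\<forall>x y. norm (g x - g y) \<le> C1 * norm (x - y)" using Lip0D(2)[OF g] by blast
  obtain C2 where C2: "C2 \<ge> 0" "\<forall>x y. norm (h x - h y) \<le> C2 * norm (x - y)" using Lip0D(2)[OF h] by blast
  show ?thesis
  proof (rule Lip0I[where C="C1+C2"])
    show "g 0 + h 0 = 0" using Lip0D(1)[OF g] Lip0D(1)[OF h] by simp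
    show "0 \<le> C1 + C2" using C1 C2 by simp
    fix x y
    have "norm ((g x + h x) - (g y + h y)) \<le> norm (g x - g y) + norm (h x - h y)"
      by (metis add_diff_add norm_triangle_ineq)
    also have "\<dots> \<le> (C1 + C2) * norm (x - y)" using C1(2) C2(2) by (simp add: distrib_right add_mono)
    finally show "norm ((g x + h x) - (g y + h y)) \<le> (C1 + C2) * norm (x - y)" .
  qed
qed

lemma Lip0_scale:
  fixes g :: "'a::real_normed_vector \<Rightarrow> real"
  shows "g \<in> Lip0 \<Longrightarrow> (\<lambda>x. c * g x) \<in> Lip0"
proof -
  assume g: "g \<in> Lip0"
  obtain C1 where C1: "C1 \<ge> 0" "\<forall>x y. norm (g x - g y) \<le> C1 * norm (x - y)" using Lip0D(2)[OF g] by blast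
  show ?thesis
  proof (rule Lip0I[where C="\<bar>c\<bar>*C1"])
    show "c * g 0 = 0" using Lip0D(1)[OF g] by simp
    show "0 \<le> \<bar>c\<bar> * C1" using C1 by simp
    fix x y
    have "norm (c * g x - c * g y) = \<bar>c\<bar> * norm (g x - g y)"
      by (metis norm_mult real_norm_def right_diff_distrib)
    also have "\<dots> \<le> \<bar>c\<bar> * (C1 * norm (x - y))" using C1(2) by (simp add: mult_left_mono)
    finally show "norm (c * g x - c * g y) \<le> \<bar>c\<bar> * C1 * norm (x - y)" by simp
  qed
qed

lemma delta_Lip0: "g \<in> Lip0 \<Longrightarrow> delta x g = g x"
  by (simp add: delta_def)

lemma delta_nLip0: "g \<notin> Lip0 \<Longrightarrow> delta x g = 0"
  by (simp add: delta_def)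

lemma Lip0_abs_le:
  fixes g :: "'a::real_normed_vector \<Rightarrow> real"
  assumes "g \<in> Lip0" shows "\<bar>g x\<bar> \<le> lip_norm g * norm x"
  using lip_upper[OF assms, of x 0] Lip0D(1)[OF assms] by simp

definition psi :: "'a::real_normed_vector set \<Rightarrow> ('a \<Rightarrow> real) \<Rightarrow> ('a \<Rightarrow> real) \<Rightarrow> real" where
  "psi F c = (\<lambda>g. \<Sum>x\<in>F. c x * delta x g)"

lemma delta_span_psi: "delta_span = {\<phi>. \<exists>S c. finite S \<and> \<phi> = psi S c}"
  by (simp add: delta_span_def psi_def)

lemma psi_Lip0: "g \<in> Lip0 \<Longrightarrow> psi F c g = (\<Sum>x\<in>F. c x * g x)"
  by (simp add: psi_def delta_Lip0)

lemma Lip0_dualI: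
  assumes "\<And>g h. g \<in> Lip0 \<Longrightarrow> h \<in> Lip0 \<Longrightarrow> \<phi> (\<lambda>x. g x + h x) = \<phi> g + \<phi> h"
    "\<And>c g. g \<in> Lip0 \<Longrightarrow> \<phi> (\<lambda>x. c * g x) = c * \<phi> g"
    "\<And>g. g \<notin> Lip0 \<Longrightarrow> \<phi> g = 0"
    "\<And>g. g \<in> Lip0 \<Longrightarrow> \<bar>\<phi> g\<bar> \<le> K * lip_norm g"
  shows "\<phi> \<in> Lip0_dual"
  using assms unfolding Lip0_dual_def by blast

lemma Lip0_dualD:
  assumes "\<phi> \<in> Lip0_dual"
  shows "\<And>g h. g \<in> Lip0 \<Longrightarrow> h \<in> Lip0 \<Longrightarrow> \<phi> (\<lambda>x. g x + h x) = \<phi> g + \<phi> h"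
    "\<And>c g. g \<in> Lip0 \<Longrightarrow> \<phi> (\<lambda>x. c * g x) = c * \<phi> g"
    "\<And>g. g \<notin> Lip0 \<Longrightarrow> \<phi> g = 0"
    "\<exists>K. \<forall>g\<in>Lip0. \<bar>\<phi> g\<bar> \<le> K * lip_norm g"
  using assms unfolding Lip0_dual_def by blast+

lemma Lip0_dualK:
  fixes \<phi> :: "('a::real_normed_vector \<Rightarrow> real) \<Rightarrow> real"
  assumes nt: "\<exists>x::'a. x \<noteq> 0" and "\<phi> \<in> Lip0_dual"
  shows "\<exists>K\<ge>0. \<forall>g\<in>Lip0. \<bar>\<phi> g\<bar> \<le> K * lip_norm g"
proof -
  obtain K where K: "\<forall>g\<in>Lip0. \<bar>\<phi> g\<bar> \<le> K * lip_norm g" using Lip0_dualD(4)[OF assms(2)] by blast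
  have "\<forall>g\<in>Lip0. \<bar>\<phi> g\<bar> \<le> max K 0 * lip_norm g"
  proof
    fix g :: "'a \<Rightarrow> real" assume g: "g \<in> Lip0"
    have a: "\<bar>\<phi> g\<bar> \<le> K * lip_norm g" using K g by blast
    obtain C where C: "C \<ge> 0" "\<forall>x y. norm (g x - g y) \<le> C * norm (x - y)" using Lip0D(2)[OF g] by blast
    have "lip_norm g \<ge> 0" using lip_nonneg[OF nt] C by blast
    then have "K * lip_norm g \<le> max K 0 * lip_norm g" by (intro mult_right_mono) auto
    then show "\<bar>\<phi> g\<bar> \<le> max K 0 * lip_norm g" using a by linarith
  qed
  then show ?thesis by (intro exI[of _ "max K 0"]) auto
qed

lemma psi_dual:
  fixes F :: "'a::real_normed_vector set"
  assumes "finite F" shows "psi F c \<in> Lip0_dual"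
proof (rule Lip0_dualI[where K="\<Sum>x\<in>F. \<bar>c x\<bar> * norm x"])
  fix g h :: "'a \<Rightarrow> real" assume "g \<in> Lip0" "h \<in> Lip0"
  then show "psi F c (\<lambda>x. g x + h x) = psi F c g + psi F c h"
    by (simp add: psi_Lip0 Lip0_add distrib_left sum.distrib)
next
  fix a and g :: "'a \<Rightarrow> real" assume "g \<in> Lip0"
  then show "psi F c (\<lambda>x. a * g x) = a * psi F c g"
    by (simp add: psi_Lip0 Lip0_scale sum_distrib_left mult.left_commute)
next
  fix g :: "'a \<Rightarrow> real" assume "g \<notin> Lip0"
  then show "psi F c g = 0" by (simp add: psi_def delta_nLip0)
next
  fix g :: "'a \<Rightarrow> real" assume g: "g \<in> Lip0"
  have "\<bar>psi F c g\<bar> = \<bar>\<Sum>x\<in>F. c x * g x\<bar>" using g by (simp add: psi_Lip0)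
  also have "\<dots> \<le> (\<Sum>x\<in>F. \<bar>c x * g x\<bar>)" by (rule sum_abs)
  also have "\<dots> \<le> (\<Sum>x\<in>F. \<bar>c x\<bar> * norm x * lip_norm g)"
  proof (rule sum_mono)
    fix x assume "x \<in> F"
    have "\<bar>g x\<bar> \<le> lip_norm g * norm x" by (rule Lip0_abs_le[OF g])
    then show "\<bar>c x * g x\<bar> \<le> \<bar>c x\<bar> * norm x * lip_norm g"
      by (simp add: abs_mult mult.assoc mult.commute[of "norm x"] mult_left_mono)
  qed
  also have "\<dots> = (\<Sum>x\<in>F. \<bar>c x\<bar> * norm x) * lip_norm g" by (simp add: sum_distrib_right)
  finally show "\<bar>psi F c g\<bar> \<le> (\<Sum>x\<in>F. \<bar>c x\<bar> * norm x) * lip_norm g" .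
qed

lemma delta_psi: "delta x = psi {x} (\<lambda>_. 1)"
  by (simp add: psi_def)

lemma delta_dual: "delta x \<in> Lip0_dual"
  by (simp add: delta_psi psi_dual)

lemma dual_add:
  assumes "\<phi> \<in> Lip0_dual" "\<psi> \<in> Lip0_dual"
  shows "(\<lambda>g. a * \<phi> g + b * \<psi> g) \<in> Lip0_dual"
proof -
  obtain K1 where K1: "\<forall>g\<in>Lip0. \<bar>\<phi> g\<bar> \<le> K1 * lip_norm g" using Lip0_dualD(4)[OF assms(1)] by blast
  obtain K2 where K2: "\<forall>g\<in>Lip0. \<bar>\<psi> g\<bar> \<le> K2 * lip_norm g" using Lip0_dualD(4)[OF assms(2)] by blast
  note d1 = Lip0_dualD(1-3)[OF assms(1)] and d2 = Lip0_dualD(1-3)[OF assms(2)]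
  show ?thesis
  proof (rule Lip0_dualI[where K="\<bar>a\<bar>*K1 + \<bar>b\<bar>*K2"])
    fix g h :: "'a \<Rightarrow> real" assume "g \<in> Lip0" "h \<in> Lip0"
    then show "a * \<phi> (\<lambda>x. g x + h x) + b * \<psi> (\<lambda>x. g x + h x) = a * \<phi> g + b * \<psi> g + (a * \<phi> h + b * \<psi> h)"
      using d1 d2 by (simp add: algebra_simps)
  next
    fix c and g :: "'a \<Rightarrow> real" assume "g \<in> Lip0"
    then show "a * \<phi> (\<lambda>x. c * g x) + b * \<psi> (\<lambda>x. c * g x) = c * (a * \<phi> g + b * \<psi> g)"
      using d1 d2 by (simp add: algebra_simps)
  next
    fix g :: "'a \<Rightarrow> real" assume "g \<notin> Lip0"
    then show "a * \<phi> g + b * \<psi> g = 0" using d1 d2 by simp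
  next
    fix g :: "'a \<Rightarrow> real" assume g: "g \<in> Lip0"
    have "\<bar>a * \<phi> g + b * \<psi> g\<bar> \<le> \<bar>a\<bar> * \<bar>\<phi> g\<bar> + \<bar>b\<bar> * \<bar>\<psi> g\<bar>" by (metis abs_mult abs_triangle_ineq)
    also have "\<dots> \<le> \<bar>a\<bar> * (K1 * lip_norm g) + \<bar>b\<bar> * (K2 * lip_norm g)"
      using K1 K2 g by (intro add_mono mult_left_mono) auto
    finally show "\<bar>a * \<phi> g + b * \<psi> g\<bar> \<le> (\<bar>a\<bar> * K1 + \<bar>b\<bar> * K2) * lip_norm g" by (simp add: algebra_simps)
  qed
qed

lemma dual_diff:
  assumes "\<phi> \<in> Lip0_dual" "\<psi> \<in> Lip0_dual"
  shows "(\<lambda>g. \<phi> g - \<psi> g) \<in> Lip0_dual"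
  using dual_add[OF assms, of 1 "-1"] by simp

lemma dual_plus:
  assumes "\<phi> \<in> Lip0_dual" "\<psi> \<in> Lip0_dual"
  shows "(\<lambda>g. \<phi> g + \<psi> g) \<in> Lip0_dual"
  using dual_add[OF assms, of 1 "1"] by simp

lemma dual_scale:
  assumes "\<phi> \<in> Lip0_dual"
  shows "(\<lambda>g. c * \<phi> g) \<in> Lip0_dual"
  using dual_add[OF assms assms, of c 0] by simp

lemma dual_upper:
  fixes \<phi> :: "('a::real_normed_vector \<Rightarrow> real) \<Rightarrow> real"
  assumes nt: "\<exists>x::'a. x \<noteq> 0" and "\<phi> \<in> Lip0_dual" "g \<in> Lip0" "lip_norm g \<le> 1"
  shows "\<bar>\<phi> g\<bar> \<le> dual_norm \<phi>"
proof -
  obtain K where K: "K \<ge> 0" "\<forall>g\<in>Lip0. \<bar>\<phi> g\<bar> \<le> K * lip_norm g" using Lip0_dualK[OF nt assms(2)] by blast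
  have "bdd_above ((\<lambda>g. \<bar>\<phi> g\<bar>) ` {g \<in> (Lip0 :: ('a \<Rightarrow> real) set). lip_norm g \<le> 1})"
  proof (rule bdd_aboveI2)
    fix h :: "'a \<Rightarrow> real" assume h: "h \<in> {g \<in> Lip0. lip_norm g \<le> 1}"
    have "\<bar>\<phi> h\<bar> \<le> K * lip_norm h" using K h by blast
    also have "\<dots> \<le> K * 1" using h K by (intro mult_left_mono) auto
    finally show "\<bar>\<phi> h\<bar> \<le> K" by simp
  qed
  from cSUP_upper[OF _ this, of g] assms show ?thesis by (simp add: dual_norm_def)
qed

lemma dual_least:
  fixes \<phi> :: "('a::real_normed_vector \<Rightarrow> real) \<Rightarrow> real"
  assumes nt: "\<exists>x::'a. x \<noteq> 0" and "\<And>g. g \<in> Lip0 \<Longrightarrow> lip_norm g \<le> 1 \<Longrightarrow> \<bar>\<phi> g\<bar> \<le> C"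
  shows "dual_norm \<phi> \<le> C"
  unfolding dual_norm_def
proof (rule cSUP_least)
  have "lip_norm (\<lambda>x::'a. 0::real) \<le> 0" by (rule lip_le[OF nt]) simp
  then have "(\<lambda>x::'a. 0::real) \<in> {g \<in> Lip0. lip_norm g \<le> 1}" using zero_Lip0 by auto
  then show "{g \<in> (Lip0 :: ('a \<Rightarrow> real) set). lip_norm g \<le> 1} \<noteq> {}" by blast
qed (use assms in auto)

lemma dual_nonneg:
  fixes \<phi> :: "('a::real_normed_vector \<Rightarrow> real) \<Rightarrow> real"
  assumes nt: "\<exists>x::'a. x \<noteq> 0" and "\<phi> \<in> Lip0_dual"
  shows "0 \<le> dual_norm \<phi>"
proof -
  have "lip_norm (\<lambda>x::'a. 0::real) \<le> 0" by (rule lip_le[OF nt]) simp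
  then have "\<bar>\<phi> (\<lambda>x. 0)\<bar> \<le> dual_norm \<phi>" using dual_upper[OF nt assms(2) zero_Lip0] by simp
  then show ?thesis by linarith
qed

lemma dual_zero:
  assumes nt: "\<exists>x::'a::real_normed_vector. x \<noteq> 0"
  shows "dual_norm (\<lambda>g::'a \<Rightarrow> real. 0) = 0"
proof -
  have "dual_norm (\<lambda>g::'a \<Rightarrow> real. 0) \<le> 0" by (rule dual_least[OF nt]) simp
  moreover have "(\<lambda>g::'a \<Rightarrow> real. 0) \<in> Lip0_dual" by (rule Lip0_dualI[where K=0]) auto
  ultimately show ?thesis using dual_nonneg[OF nt] by force
qed

lemma dual_mul:
  fixes \<phi> :: "('a::real_normed_vector \<Rightarrow> real) \<Rightarrow> real"
  assumes nt: "\<exists>x::'a. x \<noteq> 0" and ph: "\<phi> \<in> Lip0_dual" and g: "g \<in> Lip0"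
  shows "\<bar>\<phi> g\<bar> \<le> dual_norm \<phi> * lip_norm g"
proof -
  obtain C where C: "C \<ge> 0" "\<forall>x y. norm (g x - g y) \<le> C * norm (x - y)" using Lip0D(2)[OF g] by blast
  have L0: "lip_norm g \<ge> 0" using lip_nonneg[OF nt] C by blast
  show ?thesis
  proof (cases "lip_norm g = 0")
    case True
    have "g x = 0" for x using lip_upper[OF g, of x 0] Lip0D(1)[OF g] True by simp
    then have "g = (\<lambda>x. 0 * g x)" by auto
    then have "\<phi> g = 0 * \<phi> g" using Lip0_dualD(2)[OF ph g, of 0] by metis
    then show ?thesis using True by simp
  next
    case False
    then have Lp: "lip_norm g > 0" using L0 by simp
    let ?g = "\<lambda>x. (1 / lip_norm g) * g x"
    have g': "?g \<in> Lip0" by (rule Lip0_scale[OF g])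
    have "lip_norm ?g \<le> 1"
    proof (rule lip_le[OF nt])
      fix x y
      have "norm (?g x - ?g y) = norm (g x - g y) / lip_norm g"
        using Lp by (simp add: diff_divide_distrib[symmetric])
      also have "\<dots> \<le> 1 * norm (x - y)" using lip_upper[OF g, of x y] Lp by (simp add: pos_divide_le_eq mult.commute)
      finally show "norm (?g x - ?g y) \<le> 1 * norm (x - y)" .
    qed
    then have "\<bar>\<phi> ?g\<bar> \<le> dual_norm \<phi>" using dual_upper[OF nt ph g'] by simp
    moreover have "\<phi> ?g = (1 / lip_norm g) * \<phi> g" using Lip0_dualD(2)[OF ph g] .
    ultimately have "\<bar>\<phi> g\<bar> / lip_norm g \<le> dual_norm \<phi>" using Lp by (simp add: abs_mult)
    then show ?thesis using Lp by (simp add: pos_divide_le_eq)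
  qed
qed

definition ext0 :: "'a set \<Rightarrow> ('a \<Rightarrow> real) \<Rightarrow> 'a \<Rightarrow> real" where
  "ext0 A a x = (if x \<in> A then a x else 0)"

lemma sum_ext0:
  fixes d :: "'a \<Rightarrow> 'v::real_vector"
  assumes "finite C" "A \<subseteq> C"
  shows "(\<Sum>x\<in>C. ext0 A a x *\<^sub>R d x) = (\<Sum>x\<in>A. a x *\<^sub>R d x)"
proof -
  have "(\<Sum>x\<in>C. ext0 A a x *\<^sub>R d x) = (\<Sum>x\<in>C. if x \<in> A then a x *\<^sub>R d x else 0)"
    by (rule sum.cong) (auto simp: ext0_def)
  also have "\<dots> = (\<Sum>x\<in>C \<inter> A. a x *\<^sub>R d x)" using sum.inter_restrict[OF assms(1), symmetric] by simp
  also have "C \<inter> A = A" using assms by auto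
  finally show ?thesis .
qed

lemma psi_comb:
  assumes "finite A" "finite B"
  shows "a * psi A a1 g + b * psi B b1 g = psi (A \<union> B) (\<lambda>x. a * ext0 A a1 x + b * ext0 B b1 x) g"
proof -
  have fU: "finite (A \<union> B)" using assms by simp
  have "psi (A \<union> B) (\<lambda>x. a * ext0 A a1 x + b * ext0 B b1 x) g
      = a * (\<Sum>x\<in>A \<union> B. ext0 A a1 x *\<^sub>R delta x g) + b * (\<Sum>x\<in>A \<union> B. ext0 B b1 x *\<^sub>R delta x g)"
    by (simp add: psi_def sum.distrib sum_distrib_left algebra_simps)
  also have "\<dots> = a * psi A a1 g + b * psi B b1 g"
    using sum_ext0[OF fU, of A a1 "\<lambda>x. delta x g"] sum_ext0[OF fU, of B b1 "\<lambda>x. delta x g"]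
    by (simp add: psi_def)
  finally show ?thesis by simp
qed

lemma free_spaceI:
  assumes "\<phi> \<in> Lip0_dual" "\<And>\<epsilon>. \<epsilon> > 0 \<Longrightarrow> \<exists>F c. finite F \<and> dual_norm (\<lambda>g. \<phi> g - psi F c g) < \<epsilon>"
  shows "\<phi> \<in> free_space"
  unfolding free_space_def delta_span_psi using assms by fastforce

lemma free_spaceD:
  assumes "\<phi> \<in> free_space"
  shows "\<phi> \<in> Lip0_dual" "\<epsilon> > 0 \<Longrightarrow> \<exists>F c. finite F \<and> dual_norm (\<lambda>g. \<phi> g - psi F c g) < \<epsilon>"
  using assms unfolding free_space_def delta_span_psi by fastforce+

lemma dual_tri:
  fixes \<phi> :: "('a::real_normed_vector \<Rightarrow> real) \<Rightarrow> real"
  assumes nt: "\<exists>x::'a. x \<noteq> 0" and "\<phi> \<in> Lip0_dual" "\<psi> \<in> Lip0_dual"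
  shows "dual_norm (\<lambda>g. a * \<phi> g + b * \<psi> g) \<le> \<bar>a\<bar> * dual_norm \<phi> + \<bar>b\<bar> * dual_norm \<psi>"
proof (rule dual_least[OF nt])
  fix g :: "'a \<Rightarrow> real" assume g: "g \<in> Lip0" "lip_norm g \<le> 1"
  have "\<bar>a * \<phi> g + b * \<psi> g\<bar> \<le> \<bar>a\<bar> * \<bar>\<phi> g\<bar> + \<bar>b\<bar> * \<bar>\<psi> g\<bar>" by (metis abs_mult abs_triangle_ineq)
  also have "\<dots> \<le> \<bar>a\<bar> * dual_norm \<phi> + \<bar>b\<bar> * dual_norm \<psi>"
    using dual_upper[OF nt assms(2) g] dual_upper[OF nt assms(3) g] by (intro add_mono mult_left_mono) auto
  finally show "\<bar>a * \<phi> g + b * \<psi> g\<bar> \<le> \<bar>a\<bar> * dual_norm \<phi> + \<bar>b\<bar> * dual_norm \<psi>" .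
qed

lemma psi_free:
  fixes F :: "'a::real_normed_vector set"
  assumes nt: "\<exists>x::'a. x \<noteq> 0" and "finite F" shows "psi F c \<in> free_space"
proof (rule free_spaceI[OF psi_dual[OF assms(2)]])
  fix \<epsilon> :: real assume "\<epsilon> > 0"
  moreover have "dual_norm (\<lambda>g::'a\<Rightarrow>real. psi F c g - psi F c g) = 0" using dual_zero[OF nt] by simp
  ultimately show "\<exists>F' c'. finite F' \<and> dual_norm (\<lambda>g. psi F c g - psi F' c' g) < \<epsilon>" using assms(2) by metis
qed

lemma delta_free: "\<exists>x::'a. x \<noteq> 0 \<Longrightarrow> delta (x::'a::real_normed_vector) \<in> free_space"
  by (simp add: delta_psi psi_free)

lemma free_comb:
  fixes \<phi> :: "('a::real_normed_vector \<Rightarrow> real) \<Rightarrow> real"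
  assumes nt: "\<exists>x::'a. x \<noteq> 0" and ph: "\<phi> \<in> free_space" and ps: "\<psi> \<in> free_space"
  shows "(\<lambda>g. a * \<phi> g + b * \<psi> g) \<in> free_space"
proof (rule free_spaceI)
  show "(\<lambda>g. a * \<phi> g + b * \<psi> g) \<in> Lip0_dual" using dual_add free_spaceD(1) ph ps by blast
  fix \<epsilon> :: real assume e: "\<epsilon> > 0"
  define e' where "e' = \<epsilon> / (\<bar>a\<bar> + \<bar>b\<bar> + 1)"
  have e': "e' > 0" using e by (simp add: e'_def add_pos_nonneg)
  obtain A a1 where A: "finite A" "dual_norm (\<lambda>g. \<phi> g - psi A a1 g) < e'" using free_spaceD(2)[OF ph e'] by blast
  obtain B b1 where B: "finite B" "dual_norm (\<lambda>g. \<psi> g - psi B b1 g) < e'" using free_spaceD(2)[OF ps e'] by blast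
  let ?c = "\<lambda>x. a * ext0 A a1 x + b * ext0 B b1 x"
  have eq: "(\<lambda>g. a * \<phi> g + b * \<psi> g - psi (A \<union> B) ?c g) = (\<lambda>g. a * (\<phi> g - psi A a1 g) + b * (\<psi> g - psi B b1 g))"
    using psi_comb[OF A(1) B(1), of a a1 _ b b1, symmetric] by (auto simp: algebra_simps)
  have d1: "(\<lambda>g. \<phi> g - psi A a1 g) \<in> Lip0_dual" using dual_diff free_spaceD(1)[OF ph] psi_dual[OF A(1)] by blast
  have d2: "(\<lambda>g. \<psi> g - psi B b1 g) \<in> Lip0_dual" using dual_diff free_spaceD(1)[OF ps] psi_dual[OF B(1)] by blast
  have "dual_norm (\<lambda>g. a * \<phi> g + b * \<psi> g - psi (A \<union> B) ?c g)
      \<le> \<bar>a\<bar> * dual_norm (\<lambda>g. \<phi> g - psi A a1 g) + \<bar>b\<bar> * dual_norm (\<lambda>g. \<psi> g - psi B b1 g)"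
    unfolding eq using dual_tri[OF nt d1 d2] by simp
  also have "\<dots> \<le> \<bar>a\<bar> * e' + \<bar>b\<bar> * e'" using A(2) B(2) by (intro add_mono mult_left_mono) auto
  also have "\<dots> < \<epsilon>"
  proof -
    have "(\<bar>a\<bar> + \<bar>b\<bar>) * e' < (\<bar>a\<bar> + \<bar>b\<bar> + 1) * e'" using e' by simp
    also have "\<dots> = \<epsilon>" by (simp add: e'_def add_pos_nonneg)
    finally show ?thesis by (simp add: algebra_simps)
  qed
  finally show "\<exists>F c. finite F \<and> dual_norm (\<lambda>g. a * \<phi> g + b * \<psi> g - psi F c g) < \<epsilon>"
    using A(1) B(1) by blast
qed

lemma free_plus: "\<exists>x::'a. x \<noteq> 0 \<Longrightarrow> \<phi> \<in> free_space \<Longrightarrow> \<psi> \<in> free_space \<Longrightarrow>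
    (\<lambda>g. \<phi> g + \<psi> g) \<in> (free_space :: (('a::real_normed_vector \<Rightarrow> real) \<Rightarrow> real) set)"
  using free_comb[of \<phi> \<psi> 1 1] by simp

lemma free_diff: "\<exists>x::'a. x \<noteq> 0 \<Longrightarrow> \<phi> \<in> free_space \<Longrightarrow> \<psi> \<in> free_space \<Longrightarrow>
    (\<lambda>g. \<phi> g - \<psi> g) \<in> (free_space :: (('a::real_normed_vector \<Rightarrow> real) \<Rightarrow> real) set)"
  using free_comb[of \<phi> \<psi> 1 "-1"] by simp

lemma free_scale: "\<exists>x::'a. x \<noteq> 0 \<Longrightarrow> \<phi> \<in> free_space \<Longrightarrow>
    (\<lambda>g. c * \<phi> g) \<in> (free_space :: (('a::real_normed_vector \<Rightarrow> real) \<Rightarrow> real) set)"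
  using free_comb[of \<phi> \<phi> c 0] by simp

type_synonym 'a fn = "('a \<Rightarrow> real) \<Rightarrow> real"

lemma boD:
  fixes T :: "'a::real_normed_vector fn \<Rightarrow> 'b::real_normed_vector"
  assumes "T \<in> bounded_ops"
  shows "\<And>\<phi> \<psi>. \<phi> \<in> free_space \<Longrightarrow> \<psi> \<in> free_space \<Longrightarrow> T (\<lambda>g. \<phi> g + \<psi> g) = T \<phi> + T \<psi>"
    "\<And>c \<phi>. \<phi> \<in> free_space \<Longrightarrow> T (\<lambda>g. c * \<phi> g) = c *\<^sub>R T \<phi>"
    "\<exists>K. \<forall>\<phi>\<in>free_space. norm (T \<phi>) \<le> K * dual_norm \<phi>"
  using assms unfolding bounded_ops_def by blast+

lemma boK:
  fixes T :: "'a::real_normed_vector fn \<Rightarrow> 'b::real_normed_vector"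
  assumes nt: "\<exists>x::'a. x \<noteq> 0" and "T \<in> bounded_ops"
  shows "\<exists>K\<ge>0. \<forall>\<phi>\<in>free_space. norm (T \<phi>) \<le> K * dual_norm \<phi>"
proof -
  obtain K where K: "\<forall>\<phi>\<in>free_space. norm (T \<phi>) \<le> K * dual_norm \<phi>" using boD(3)[OF assms(2)] by blast
  have "\<forall>\<phi>\<in>free_space. norm (T \<phi>) \<le> max K 0 * dual_norm \<phi>"
  proof
    fix \<phi> :: "'a fn" assume p: "\<phi> \<in> free_space"
    have "dual_norm \<phi> \<ge> 0" using dual_nonneg[OF nt free_spaceD(1)[OF p]] .
    then have "K * dual_norm \<phi> \<le> max K 0 * dual_norm \<phi>" by (intro mult_right_mono) auto
    then show "norm (T \<phi>) \<le> max K 0 * dual_norm \<phi>" using K p by force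
  qed
  then show ?thesis by (intro exI[of _ "max K 0"]) auto
qed

lemma bo_sub:
  fixes T :: "'a::real_normed_vector fn \<Rightarrow> 'b::real_normed_vector"
  assumes nt: "\<exists>x::'a. x \<noteq> 0" and T: "T \<in> bounded_ops" and "\<phi> \<in> free_space" "\<psi> \<in> free_space"
  shows "T (\<lambda>g. \<phi> g - \<psi> g) = T \<phi> - T \<psi>"
proof -
  have d: "(\<lambda>g. \<phi> g - \<psi> g) \<in> free_space" using free_diff[OF nt assms(3,4)] .
  have "T \<phi> = T (\<lambda>g. (\<lambda>g. \<phi> g - \<psi> g) g + \<psi> g)" by simp
  also have "\<dots> = T (\<lambda>g. \<phi> g - \<psi> g) + T \<psi>" using boD(1)[OF T d assms(4)] .
  finally show ?thesis by simp
qed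

lemma bo_zero:
  fixes T :: "'a::real_normed_vector fn \<Rightarrow> 'b::real_normed_vector"
  assumes nt: "\<exists>x::'a. x \<noteq> 0" and T: "T \<in> bounded_ops"
  shows "T (\<lambda>g. 0) = 0"
  using boD(2)[OF T delta_free[OF nt, of 0], of 0] by simp

lemma bo_delta0:
  fixes T :: "'a::real_normed_vector fn \<Rightarrow> 'b::real_normed_vector"
  assumes nt: "\<exists>x::'a. x \<noteq> 0" and T: "T \<in> bounded_ops"
  shows "T (delta 0) = 0"
proof -
  have "delta (0::'a) = (\<lambda>g. 0)" by (auto simp: delta_def Lip0_def)
  then show ?thesis using bo_zero[OF assms] by simp
qed

lemma bo_psi:
  fixes T :: "'a::real_normed_vector fn \<Rightarrow> 'b::real_normed_vector"
  assumes nt: "\<exists>x::'a. x \<noteq> 0" and T: "T \<in> bounded_ops" and F: "finite F"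
  shows "T (psi F c) = (\<Sum>x\<in>F. c x *\<^sub>R T (delta x))"
  using F
proof (induction F rule: finite_induct)
  case empty
  then show ?case using bo_zero[OF nt T] by (simp add: psi_def)
next
  case (insert a F)
  have "psi (insert a F) c = (\<lambda>g. (\<lambda>g. c a * delta a g) g + psi F c g)"
    using insert by (simp add: psi_def)
  then have "T (psi (insert a F) c) = T (\<lambda>g. c a * delta a g) + T (psi F c)"
    using boD(1)[OF T free_scale[OF nt delta_free[OF nt]] psi_free[OF nt insert(1)]] by simp
  also have "\<dots> = c a *\<^sub>R T (delta a) + (\<Sum>x\<in>F. c x *\<^sub>R T (delta x))"
    using boD(2)[OF T delta_free[OF nt]] insert by simp
  finally show ?case using insert by simp
qed

lemma bo_diff:
  fixes T :: "'a::real_normed_vector fn \<Rightarrow> 'b::real_normed_vector"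
  assumes T: "T \<in> bounded_ops" and S: "S \<in> bounded_ops"
  shows "(\<lambda>\<phi>. T \<phi> - S \<phi>) \<in> bounded_ops"
proof -
  obtain K1 where K1: "\<forall>\<phi>\<in>free_space. norm (T \<phi>) \<le> K1 * dual_norm \<phi>" using boD(3)[OF T] by blast
  obtain K2 where K2: "\<forall>\<phi>\<in>free_space. norm (S \<phi>) \<le> K2 * dual_norm \<phi>" using boD(3)[OF S] by blast
  have "\<forall>\<phi>\<in>free_space. norm (T \<phi> - S \<phi>) \<le> (K1 + K2) * dual_norm \<phi>"
  proof
    fix \<phi> :: "'a fn" assume "\<phi> \<in> free_space"
    then have "norm (T \<phi> - S \<phi>) \<le> K1 * dual_norm \<phi> + K2 * dual_norm \<phi>"
      using K1 K2 norm_triangle_ineq4[of "T \<phi>" "S \<phi>"] by force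
    then show "norm (T \<phi> - S \<phi>) \<le> (K1 + K2) * dual_norm \<phi>" by (simp add: algebra_simps)
  qed
  then have "\<exists>K. \<forall>\<phi>\<in>free_space. norm (T \<phi> - S \<phi>) \<le> K * dual_norm \<phi>" by blast
  then show ?thesis using boD(1,2)[OF T] boD(1,2)[OF S]
    unfolding bounded_ops_def by (auto simp: algebra_simps)
qed

lemma op_upper:
  fixes T :: "'a::real_normed_vector fn \<Rightarrow> 'b::real_normed_vector"
  assumes nt: "\<exists>x::'a. x \<noteq> 0" and T: "T \<in> bounded_ops" and p: "\<phi> \<in> free_space" "dual_norm \<phi> \<le> 1"
  shows "norm (T \<phi>) \<le> op_norm T"
proof -
  obtain K where K: "K \<ge> 0" "\<forall>\<phi>\<in>free_space. norm (T \<phi>) \<le> K * dual_norm \<phi>" using boK[OF nt T] by blast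
  have "bdd_above ((\<lambda>\<phi>. norm (T \<phi>)) ` {\<phi> \<in> (free_space :: 'a fn set). dual_norm \<phi> \<le> 1})"
  proof (rule bdd_aboveI2)
    fix \<psi> :: "'a fn" assume h: "\<psi> \<in> {\<phi> \<in> free_space. dual_norm \<phi> \<le> 1}"
    have "norm (T \<psi>) \<le> K * dual_norm \<psi>" using K h by blast
    also have "\<dots> \<le> K * 1" using h K by (intro mult_left_mono) auto
    finally show "norm (T \<psi>) \<le> K" by simp
  qed
  from cSUP_upper[OF _ this, of \<phi>] p show ?thesis by (simp add: op_norm_def)
qed

lemma bo_quot:
  fixes T :: "'a::real_normed_vector fn \<Rightarrow> 'b::real_normed_vector"
  assumes nt: "\<exists>x::'a. x \<noteq> 0" and T: "T \<in> bounded_ops" and xy: "x \<noteq> y"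
  shows "norm ((1 / norm (x - y)) *\<^sub>R (T (delta x) - T (delta y))) \<le> op_norm T"
proof -
  let ?d = "norm (x - y)"
  have dp: "?d > 0" using xy by simp
  let ?m = "\<lambda>g. (1 / ?d) * (\<lambda>g. delta x g - delta y g) g"
  have mf: "?m \<in> free_space" by (rule free_scale[OF nt free_diff[OF nt delta_free[OF nt] delta_free[OF nt]]])
  have "T ?m = (1 / ?d) *\<^sub>R (T (delta x) - T (delta y))"
    using boD(2)[OF T free_diff[OF nt delta_free[OF nt] delta_free[OF nt]], of "1 / ?d"]
      bo_sub[OF nt T delta_free[OF nt] delta_free[OF nt]] by simp
  moreover have "dual_norm ?m \<le> 1"
  proof (rule dual_least[OF nt])
    fix g :: "'a \<Rightarrow> real" assume g: "g \<in> Lip0" "lip_norm g \<le> 1"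
    have "\<bar>g x - g y\<bar> \<le> lip_norm g * ?d" using lip_upper[OF g(1), of x y] by simp
    also have "\<dots> \<le> 1 * ?d" using g(2) by (intro mult_right_mono) auto
    finally have "\<bar>g x - g y\<bar> / ?d \<le> 1" using dp by (simp add: pos_divide_le_eq)
    then show "\<bar>?m g\<bar> \<le> 1" using g(1) dp by (simp add: delta_Lip0 abs_mult)
  qed
  ultimately show ?thesis using op_upper[OF nt T mf] by simp
qed

lemma norm_scale_helper:
  fixes y x :: "'b::real_normed_vector"
  assumes "s > 0"
  shows "norm ((1 / s) *\<^sub>R y + x) = norm (y + s *\<^sub>R x) / s"
proof -
  have "(1 / s) *\<^sub>R y + x = (1 / s) *\<^sub>R (y + s *\<^sub>R x)" using assms by (simp add: scaleR_add_right)
  then show ?thesis using assms by simp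
qed

lemma HB_step:
  fixes ll :: "'b::real_normed_vector \<Rightarrow> real"
  assumes l: "linear ll" and bd: "\<forall>v\<in>span H. \<bar>ll v\<bar> \<le> norm v" and x: "x \<notin> span H"
  shows "\<exists>ll'. linear ll' \<and> (\<forall>v\<in>span H. ll' v = ll v) \<and> (\<forall>v\<in>span (insert x H). \<bar>ll' v\<bar> \<le> norm v)"
proof -
  obtain B where B: "B \<subseteq> H" "independent B" "H \<subseteq> span B" by (rule basis_exists)
  have spB1: "span B \<subseteq> span H" by (rule span_mono[OF B(1)])
  have spB2: "span H \<subseteq> span B" using span_mono[OF B(3)] by (simp add: span_span)
  have spB: "span B = span H" using spB1 spB2 by (rule antisym)
  have xB: "x \<notin> span B" using x spB by simp
  have ind: "independent (insert x B)" using B(2) xB by (simp add: independent_insertI)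
  have key: "ll y - norm (y - x) \<le> norm (z + x) - ll z" if "y \<in> span H" "z \<in> span H" for y z
  proof -
    have "ll y + ll z = ll (y + z)" using l by (simp add: linear_add)
    also have "\<dots> \<le> norm (y + z)" using bd that by (meson abs_le_D1 span_add)
    also have "y + z = (y - x) + (z + x)" by simp
    also have "norm \<dots> \<le> norm (y - x) + norm (z + x)" by (rule norm_triangle_ineq)
    finally show ?thesis by simp
  qed
  define c where "c = (SUP y\<in>span H. ll y - norm (y - x))"
  have ne: "span H \<noteq> {}" using span_zero by blast
  have bdd: "bdd_above ((\<lambda>y. ll y - norm (y - x)) ` span H)"
    using key[OF _ span_zero] by (intro bdd_aboveI2) (auto simp: linear_0[OF l])
  have c1: "ll y - norm (y - x) \<le> c" if "y \<in> span H" for y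
    unfolding c_def using cSUP_upper[OF that bdd] .
  have c2: "c \<le> norm (z + x) - ll z" if "z \<in> span H" for z
    unfolding c_def using key[OF _ that] by (intro cSUP_least[OF ne]) auto
  have "\<exists>g. linear g \<and> (\<forall>z\<in>insert x B. g z = (if z = x then c else ll z))"
    using linear_independent_extend[OF ind, of "\<lambda>z. if z = x then c else ll z"] by simp
  then obtain ll' where l': "linear ll'" "\<forall>z\<in>insert x B. ll' z = (if z = x then c else ll z)"
    by blast
  have agree: "ll' v = ll v" if "v \<in> span H" for v
  proof -
    have "\<forall>z\<in>B. ll' z = ll z"
    proof
      fix z assume z: "z \<in> B"
      then have "z \<noteq> x" using xB span_base by blast
      then show "ll' z = ll z" using l'(2) z by simp
    qed
    then show ?thesis using linear_eq_on_span[OF l'(1) l, of B v] that spB by blast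
  qed
  have lx: "ll' x = c" using l'(2) by simp
  have up: "ll' v \<le> norm v" if v: "v \<in> span (insert x H)" for v
  proof -
    obtain t where t: "v - t *\<^sub>R x \<in> span H" using v by (auto simp: span_insert)
    define y where "y = v - t *\<^sub>R x"
    have vy: "v = y + t *\<^sub>R x" by (simp add: y_def)
    have yH: "y \<in> span H" using t by (simp add: y_def)
    have lv: "ll' v = ll y + t * c" using vy agree[OF yH] lx l'(1) by (simp add: linear_add linear_cmul)
    consider "t = 0" | "t > 0" | "t < 0" by linarith
    then show ?thesis
    proof cases
      case 1 then show ?thesis using lv vy bd yH by auto
    next
      case 2
      have zH: "(1 / t) *\<^sub>R y \<in> span H" using yH by (simp add: span_scale)
      have "c \<le> norm ((1 / t) *\<^sub>R y + x) - ll ((1 / t) *\<^sub>R y)" using c2[OF zH] .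
      also have "\<dots> = (norm (y + t *\<^sub>R x) - ll y) / t"
        using norm_scale_helper[OF 2] l by (simp add: linear_cmul diff_divide_distrib)
      finally have "t * c \<le> norm (y + t *\<^sub>R x) - ll y" using 2 by (simp add: le_divide_eq mult.commute)
      then show ?thesis using lv vy by simp
    next
      case 3
      define s where "s = - t"
      have s: "s > 0" using 3 by (simp add: s_def)
      have zH: "(1 / s) *\<^sub>R y \<in> span H" using yH by (simp add: span_scale)
      have "ll ((1 / s) *\<^sub>R y) - norm ((1 / s) *\<^sub>R y - x) \<le> c" using c1[OF zH] .
      moreover have "norm ((1 / s) *\<^sub>R y - x) = norm (y + t *\<^sub>R x) / s"
        using norm_scale_helper[OF s, of y "- x"] by (simp add: s_def)
      moreover have "ll ((1 / s) *\<^sub>R y) = ll y / s" using l by (simp add: linear_cmul)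
      ultimately have "(ll y - norm (y + t *\<^sub>R x)) / s \<le> c" by (simp add: diff_divide_distrib)
      then have "ll y - norm (y + t *\<^sub>R x) \<le> s * c" using s by (simp add: divide_le_eq mult.commute)
      then show ?thesis using lv vy by (simp add: s_def)
    qed
  qed
  have "\<bar>ll' v\<bar> \<le> norm v" if v: "v \<in> span (insert x H)" for v
  proof -
    have "- v \<in> span (insert x H)" using v by (simp add: span_neg)
    then have "ll' (- v) \<le> norm v" using up by fastforce
    then have "- ll' v \<le> norm v" using l'(1) by (simp add: linear_neg)
    then show ?thesis using up[OF v] by linarith
  qed
  then show ?thesis using l'(1) agree by blast
qed

lemma HB_finite:
  fixes w :: "'b::real_normed_vector"
  assumes "finite G"
  shows "\<exists>ll. linear ll \<and> ll w = norm w \<and> (\<forall>v\<in>span (insert w G). \<bar>ll v\<bar> \<le> norm v)"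
  using assms
proof (induction G rule: finite_induct)
  case empty
  show ?case
  proof (cases "w = 0")
    case True
    have "linear (\<lambda>v::'b. 0::real)" by (simp add: linear_zero)
    then show ?thesis using True by (intro exI[of _ "\<lambda>v. 0"]) auto
  next
    case False
    have "independent {w}" using False by (simp add: independent_insert)
    then have "\<exists>g. linear g \<and> (\<forall>x\<in>{w}. g x = norm w)"
      using linear_independent_extend[of "{w}" "\<lambda>_. norm w"] by simp
    then obtain ll where l: "linear ll" "\<forall>x\<in>{w}. ll x = norm w"
      by blast
    have "\<bar>ll v\<bar> \<le> norm v" if vw: "v \<in> span {w}" for v
    proof -
      obtain k where "v = k *\<^sub>R w" using vw by (auto simp: span_singleton)
      then show ?thesis using l by (simp add: linear_cmul abs_mult)
    qed
    then show ?thesis using l by auto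
  qed
next
  case (insert x G)
  then obtain ll where l: "linear ll" "ll w = norm w" "\<forall>v\<in>span (insert w G). \<bar>ll v\<bar> \<le> norm v" by blast
  have sp: "span (insert w (insert x G)) = span (insert x (insert w G))" by (simp add: insert_commute)
  show ?case
  proof (cases "x \<in> span (insert w G)")
    case True
    then have "span (insert x (insert w G)) = span (insert w G)" by (rule span_redundant)
    then show ?thesis using l sp by auto
  next
    case False
    from HB_step[OF l(1) l(3) False] obtain ll' where
      l': "linear ll'" "\<forall>v\<in>span (insert w G). ll' v = ll v" "\<forall>v\<in>span (insert x (insert w G)). \<bar>ll' v\<bar> \<le> norm v"
      by blast
    have "w \<in> span (insert w G)" by (simp add: span_base)
    then have "ll' w = norm w" using l'(2) l(2) by simp
    then show ?thesis using l' sp by auto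
  qed
qed

lemma mcshane_sum:
  fixes h :: "'a::real_normed_vector \<Rightarrow> real"
  assumes nt: "\<exists>x::'a. x \<noteq> 0" and F: "finite F" and h0: "h 0 = 0" and L: "L \<ge> 0"
    and hL: "\<And>x y. x \<in> insert 0 F \<Longrightarrow> y \<in> insert 0 F \<Longrightarrow> \<bar>h x - h y\<bar> \<le> L * norm (x - y)"
  shows "(\<Sum>x\<in>F. c x * h x) \<le> dual_norm (psi F c) * L"
proof -
  define F0 where "F0 = insert 0 F"
  have F0: "finite F0" "F0 \<noteq> {}" using F by (auto simp: F0_def)
  define H where "H x = Min ((\<lambda>a. h a + L * norm (x - a)) ` F0)" for x
  have fin: "finite ((\<lambda>a. h a + L * norm (x - a)) ` F0)" "(\<lambda>a. h a + L * norm (x - a)) ` F0 \<noteq> {}" for x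
    using F0 by auto
  have Ha: "H a = h a" if a: "a \<in> F0" for a
  proof (rule antisym)
    have "h a + L * norm (a - a) \<in> (\<lambda>b. h b + L * norm (a - b)) ` F0" using a by blast
    then show "H a \<le> h a" unfolding H_def using Min_le[OF fin(1)] by fastforce
    show "h a \<le> H a" unfolding H_def
    proof (rule Min.boundedI[OF fin])
      fix r assume "r \<in> (\<lambda>b. h b + L * norm (a - b)) ` F0"
      then obtain b where b: "b \<in> F0" "r = h b + L * norm (a - b)" by blast
      have "\<bar>h a - h b\<bar> \<le> L * norm (a - b)" using hL a b(1) by (simp add: F0_def)
      then show "h a \<le> r" using b by linarith
    qed
  qed
  have Hle: "H x \<le> H y + L * norm (x - y)" for x y
  proof -
    have "H y \<in> (\<lambda>a. h a + L * norm (y - a)) ` F0" unfolding H_def by (rule Min_in[OF fin])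
    then obtain b where b: "b \<in> F0" "H y = h b + L * norm (y - b)" by blast
    have "H x \<le> h b + L * norm (x - b)" unfolding H_def using Min_le[OF fin(1)] b(1) by blast
    also have "norm (x - b) \<le> norm (x - y) + norm (y - b)" using norm_triangle_ineq[of "x - y" "y - b"] by simp
    then have "L * norm (x - b) \<le> L * (norm (x - y) + norm (y - b))" using L by (rule mult_left_mono)
    finally show ?thesis using b by (simp add: algebra_simps)
  qed
  have Hlip: "norm (H x - H y) \<le> L * norm (x - y)" for x y
    using Hle[of x y] Hle[of y x] by (simp add: norm_minus_commute abs_le_iff)
  have H0: "H 0 = 0" using Ha[of 0] h0 by (simp add: F0_def)
  have HL: "H \<in> Lip0" by (rule Lip0I[OF H0 L Hlip])
  have lipH: "lip_norm H \<le> L" by (rule lip_le[OF nt Hlip])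
  have "(\<Sum>x\<in>F. c x * h x) = psi F c H"
    using Ha by (simp add: psi_Lip0[OF HL] F0_def)
  also have "\<dots> \<le> \<bar>psi F c H\<bar>" by simp
  also have "\<dots> \<le> dual_norm (psi F c) * lip_norm H" by (rule dual_mul[OF nt psi_dual[OF F] HL])
  also have "\<dots> \<le> dual_norm (psi F c) * L"
    by (rule mult_left_mono[OF lipH dual_nonneg[OF nt psi_dual[OF F]]])
  finally show ?thesis .
qed

lemma fd_seq_compact:
  fixes B :: "'a::real_normed_vector set"
  assumes "finite B"
  shows "closed (span B) \<and> (\<forall>u::nat\<Rightarrow>'a. (\<forall>n. u n \<in> span B) \<longrightarrow> bounded (range u) \<longrightarrow>
           (\<exists>r l. strict_mono r \<and> l \<in> span B \<and> (u \<circ> r) \<longlonglongrightarrow> l))"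
  using assms
proof (induction B rule: finite_induct)
  case empty
  have sp: "span ({}::'a set) = {0}" by simp
  have E0: "\<exists>r l. strict_mono r \<and> l \<in> span {} \<and> (u \<circ> r) \<longlonglongrightarrow> l" if "\<forall>n. u n \<in> span ({}::'a set)" for u :: "nat \<Rightarrow> 'a"
  proof -
    have "u \<circ> id = (\<lambda>n. 0)" using that by auto
    then show ?thesis by (intro exI[of _ id] exI[of _ 0]) (auto simp: strict_mono_def)
  qed
  have "closed (span ({}::'a set))" using sp by simp
  then show ?case
    apply (intro conjI allI impI)
     apply assumption
    subgoal for u
    proof -
      assume a: "\<forall>n. u n \<in> span ({}::'a set)"
      then have "u = (\<lambda>n. 0)" by auto
      moreover have "strict_mono (id::nat\<Rightarrow>nat)" by (simp add: strict_mono_def)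
      ultimately show ?thesis by (intro exI[of _ id] exI[of _ 0]) (auto simp: strict_mono_def)
    qed
    done
next
  case (insert b B)
  note IH = insert(3)
  show ?case
  proof (cases "b \<in> span B")
    case True
    then show ?thesis using IH span_redundant[OF True] by simp
  next
    case False
    have cl: "closed (span B)" using conjunct1[OF IH] by simp
    have ne: "span B \<noteq> {}" using span_zero by blast
    define d where "d = infdist b (span B)"
    have d: "d > 0" unfolding d_def using infdist_pos_not_in_closed[OF cl ne False] .
    have lb: "\<bar>t\<bar> * d \<le> norm (y + t *\<^sub>R b)" if y: "y \<in> span B" for y t
    proof (cases "t = 0")
      case True then show ?thesis by simp
    next
      case False
      have m: "- ((1 / t) *\<^sub>R y) \<in> span B" using y by (simp add: span_scale span_neg)
      have "d \<le> dist b (- ((1 / t) *\<^sub>R y))" unfolding d_def by (rule infdist_le[OF m])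
      also have "\<dots> = norm ((1 / t) *\<^sub>R (y + t *\<^sub>R b))" using False
        by (simp add: dist_norm scaleR_add_right norm_minus_commute add.commute)
      also have "\<dots> = norm (y + t *\<^sub>R b) / \<bar>t\<bar>" by simp
      finally show ?thesis using False by (simp add: le_divide_eq mult.commute)
    qed
    have seq: "\<exists>r l. strict_mono r \<and> l \<in> span (insert b B) \<and> (u \<circ> r) \<longlonglongrightarrow> l"
      if u: "\<forall>n. u n \<in> span (insert b B)" "bounded (range u)" for u :: "nat \<Rightarrow> 'a"
    proof -
      obtain M where M: "\<forall>n. norm (u n) \<le> M" using u(2) by (auto simp: bounded_iff)
      have "\<forall>n. \<exists>t. u n - t *\<^sub>R b \<in> span B" using u(1) by (auto simp: span_insert)
      then obtain t where t: "\<forall>n. u n - t n *\<^sub>R b \<in> span B" by metis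
      define v where "v n = u n - t n *\<^sub>R b" for n
      have vB: "v n \<in> span B" for n using t by (simp add: v_def)
      have uv: "u n = v n + t n *\<^sub>R b" for n by (simp add: v_def)
      have tb: "\<bar>t n\<bar> \<le> M / d" for n
        using lb[OF vB[of n], of "t n"] M[rule_format, of n] d by (simp add: uv le_divide_eq)
      have "bounded (range t)" using tb by (auto simp: bounded_iff intro!: exI[of _ "M / d"])
      then obtain t0 r1 where r1: "strict_mono r1" "(t \<circ> r1) \<longlonglongrightarrow> t0"
        using bounded_imp_convergent_subsequence by blast
      have vb: "norm (v n) \<le> M + M / d * norm b" for n
      proof -
        have "norm (v n) \<le> norm (u n) + norm (t n *\<^sub>R b)" unfolding v_def by (rule norm_triangle_ineq4)
        also have "\<dots> \<le> M + M / d * norm b" using M[rule_format, of n] mult_right_mono[OF tb[of n] norm_ge_zero[of b]] by (intro add_mono) auto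
        finally show ?thesis .
      qed
      have "bounded (range (v \<circ> r1))" using vb by (auto simp: bounded_iff intro!: exI[of _ "M + M / d * norm b"])
      moreover have "\<forall>n. (v \<circ> r1) n \<in> span B" using vB by simp
      ultimately obtain r2 l where r2: "strict_mono r2" "l \<in> span B" "((v \<circ> r1) \<circ> r2) \<longlonglongrightarrow> l"
        using IH by blast
      have tc: "((t \<circ> r1) \<circ> r2) \<longlonglongrightarrow> t0" using LIMSEQ_subseq_LIMSEQ[OF r1(2) r2(1)] .
      have "(\<lambda>n. ((v \<circ> r1) \<circ> r2) n + ((t \<circ> r1) \<circ> r2) n *\<^sub>R b) \<longlonglongrightarrow> l + t0 *\<^sub>R b"
        by (intro tendsto_intros r2(3) tc)
      moreover have "(\<lambda>n. ((v \<circ> r1) \<circ> r2) n + ((t \<circ> r1) \<circ> r2) n *\<^sub>R b) = u \<circ> (r1 \<circ> r2)"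
        by (auto simp: uv)
      moreover have "strict_mono (r1 \<circ> r2)" using r1(1) r2(1) by (rule strict_mono_o)
      moreover have "l + t0 *\<^sub>R b \<in> span (insert b B)"
        using r2(2) by (meson insertI1 span_add span_base span_mono span_scale subsetD subset_insertI)
      ultimately show ?thesis by metis
    qed
    have "closed (span (insert b B))"
    proof (unfold closed_sequential_limits, intro allI impI, elim conjE)
      fix x :: "nat \<Rightarrow> 'a" and l assume x: "\<forall>n. x n \<in> span (insert b B)" "x \<longlonglongrightarrow> l"
      have "bounded (range x)" using x(2) by (rule convergent_imp_bounded)
      then obtain r l' where r: "strict_mono r" "l' \<in> span (insert b B)" "(x \<circ> r) \<longlonglongrightarrow> l'"
        using seq x(1) by blast
      have "(x \<circ> r) \<longlonglongrightarrow> l" using LIMSEQ_subseq_LIMSEQ[OF x(2) r(1)] .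
      then have "l = l'" using r(3) by (rule LIMSEQ_unique)
      then show "l \<in> span (insert b B)" using r(2) by simp
    qed
    then show ?thesis using seq by blast
  qed
qed

lemma unit_seq_subconv:
  fixes u :: "nat \<Rightarrow> 'a::real_normed_vector"
  assumes B: "finite (B::'a set)" "span B = UNIV" and u: "\<forall>n. norm (u n) = 1"
  shows "\<exists>r l. strict_mono r \<and> norm l = 1 \<and> (u \<circ> r) \<longlonglongrightarrow> l"
proof -
  have "bounded (range u)" using u by (auto simp: bounded_iff)
  then obtain r l where r: "strict_mono r" "(u \<circ> r) \<longlonglongrightarrow> l"
    using fd_seq_compact[OF B(1)] B(2) by blast
  have "(\<lambda>n. norm ((u \<circ> r) n)) \<longlonglongrightarrow> norm l" by (intro tendsto_intros r(2))
  moreover have "(\<lambda>n. norm ((u \<circ> r) n)) = (\<lambda>n. 1)" using u by auto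
  ultimately have "norm l = 1" using LIMSEQ_unique tendsto_const by metis
  then show ?thesis using r by blast
qed

lemma uc_step:
  fixes q w :: "'b::real_normed_vector"
  assumes M: "M > 0" "norm w = M" and qM: "norm q \<le> M" and qw: "norm (q + w) \<ge> 2 * M - \<eta>"
    and d: "\<delta> > 0" and uc: "\<forall>x y::'b. norm x = 1 \<longrightarrow> norm y = 1 \<longrightarrow> norm (x - y) \<ge> e \<longrightarrow> norm ((1/2) *\<^sub>R (x + y)) \<le> 1 - \<delta>"
    and eta: "\<eta> \<ge> 0" "\<eta> < M * \<delta>" "\<eta> < M"
  shows "norm (q - w) < \<eta> + M * e"
proof -
  define a where "a = (1 / M) *\<^sub>R q"
  define b where "b = (1 / M) *\<^sub>R w"
  define \<theta> where "\<theta> = \<eta> / M"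
  have th: "\<theta> \<ge> 0" "\<theta> < \<delta>" "\<theta> < 1" using eta M by (auto simp: \<theta>_def pos_divide_less_eq mult.commute)
  have nb: "norm b = 1" using M by (simp add: b_def)
  have na: "norm a \<le> 1" using qM M by (simp add: a_def)
  have nab: "norm (a + b) \<ge> 2 - \<theta>"
  proof -
    have "a + b = (1 / M) *\<^sub>R (q + w)" by (simp add: a_def b_def scaleR_add_right)
    then have "norm (a + b) = norm (q + w) / M" using M by simp
    moreover have "(2 * M - \<eta>) / M = 2 - \<theta>" using M by (simp add: \<theta>_def diff_divide_distrib)
    moreover have "(2 * M - \<eta>) / M \<le> norm (q + w) / M" using qw M by (simp add: divide_right_mono)
    ultimately show ?thesis by simp
  qed
  define r where "r = norm a"
  have r: "r \<ge> 1 - \<theta>" using nab nb norm_triangle_ineq[of a b] by (simp add: r_def)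
  have rp: "r > 0" using r th by linarith
  have r1: "r \<le> 1" using na by (simp add: r_def)
  define a' where "a' = (1 / r) *\<^sub>R a"
  have na': "norm a' = 1" using rp by (simp add: a'_def r_def)
  have "a' - a = (1 / r - 1) *\<^sub>R a" by (simp add: a'_def algebra_simps)
  then have "norm (a' - a) = \<bar>1 / r - 1\<bar> * r" by (simp add: r_def)
  also have "\<dots> = 1 - r"
  proof -
    have "1 / r \<ge> 1" using rp r1 by (simp add: le_divide_eq)
    then have "\<bar>1 / r - 1\<bar> = 1 / r - 1" by simp
    moreover have "(1 / r - 1) * r = 1 - r" using rp by (simp add: left_diff_distrib)
    ultimately show ?thesis by simp
  qed
  finally have aa: "norm (a' - a) \<le> \<theta>" using r by linarith
  have "norm (a' + b) \<ge> 2 - 2 * \<theta>"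
  proof -
    have "norm (a + b) \<le> norm (a' + b) + norm (a' - a)"
      using norm_triangle_ineq4[of "a' + b" "a' - a"] by (simp add: algebra_simps)
    then show ?thesis using nab aa by linarith
  qed
  have small: "norm (a' - b) < e"
  proof (rule ccontr)
    assume "\<not> norm (a' - b) < e"
    then have "norm ((1/2) *\<^sub>R (a' + b)) \<le> 1 - \<delta>" using uc na' nb by auto
    then have "norm (a' + b) \<le> 2 - 2 * \<delta>" by simp
    then show False using \<open>norm (a' + b) \<ge> 2 - 2 * \<theta>\<close> th by linarith
  qed
  have "norm (a - b) \<le> norm (a - a') + norm (a' - b)" using norm_triangle_ineq[of "a - a'" "a' - b"] by simp
  also have "\<dots> < \<theta> + e" using aa small by (simp add: norm_minus_commute)
  finally have ab: "norm (a - b) < \<theta> + e" .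
  have "q - w = M *\<^sub>R (a - b)" using M by (simp add: a_def b_def algebra_simps)
  then have "norm (q - w) = M * norm (a - b)" using M by simp
  also have "\<dots> < M * (\<theta> + e)" using ab M by simp
  also have "\<dots> = \<eta> + M * e" using M by (simp add: \<theta>_def algebra_simps)
  finally show ?thesis .
qed

lemma uc_conv:
  fixes q :: "nat \<Rightarrow> 'b::real_normed_vector" and w :: 'b
  assumes uc: "uniformly_convex TYPE('b)" and M: "M > 0" "norm w = M"
    and qM: "\<And>n. norm (q n) \<le> M" and qw: "\<And>n. norm (q n + w) \<ge> 2 * M - 1 / Suc n"
  shows "q \<longlonglongrightarrow> w"
  unfolding LIMSEQ_iff
proof (intro allI impI)
  fix \<epsilon> :: real assume e: "\<epsilon> > 0"
  have e': "\<epsilon> / (2 * M) > 0" using e M by simp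
  obtain \<delta> where d: "\<delta> > 0" and ucd: "\<forall>x y::'b. norm x = 1 \<longrightarrow> norm y = 1 \<longrightarrow> norm (x - y) \<ge> \<epsilon> / (2 * M) \<longrightarrow> norm ((1/2) *\<^sub>R (x + y)) \<le> 1 - \<delta>"
    using uc e' unfolding uniformly_convex_def by blast
  define \<kappa> where "\<kappa> = min (\<epsilon> / 2) (M * min \<delta> 1)"
  have k: "\<kappa> > 0" using e M d by (simp add: \<kappa>_def)
  obtain N where N: "N > 0" "inverse (real N) < \<kappa>" using ex_inverse_of_nat_less[OF k] by auto
  show "\<exists>no. \<forall>n\<ge>no. norm (q n - w) < \<epsilon>"
  proof (intro exI allI impI)
    fix n assume n: "N \<le> n"
    define \<eta> where "\<eta> = 1 / real (Suc n)"
    have "inverse (real (Suc n)) \<le> inverse (real N)" using n N(1) by (intro le_imp_inverse_le) auto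
    then have "\<eta> \<le> inverse (real N)" by (simp add: \<eta>_def inverse_eq_divide)
    then have eta: "\<eta> < \<kappa>" using N by simp
    have "norm (q n - w) < \<eta> + M * (\<epsilon> / (2 * M))"
    proof (rule uc_step[OF M qM _ d ucd])
      show "2 * M - \<eta> \<le> norm (q n + w)" using qw[of n] by (simp add: \<eta>_def)
      show "\<eta> \<ge> 0" by (simp add: \<eta>_def)
      have k1: "\<kappa> \<le> M * min \<delta> 1" by (simp add: \<kappa>_def)
      have k2: "M * min \<delta> 1 \<le> M * \<delta>" using M by (intro mult_left_mono) auto
      have k3: "M * min \<delta> 1 \<le> M * 1" using M by (intro mult_left_mono) auto
      show "\<eta> < M * \<delta>" using eta k1 k2 by linarith
      show "\<eta> < M" using eta k1 k3 by linarith
    qed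
    also have "\<dots> < \<epsilon>"
    proof -
      have "\<kappa> \<le> \<epsilon> / 2" by (simp add: \<kappa>_def)
      moreover have "M * (\<epsilon> / (2 * M)) = \<epsilon> / 2" using M by simp
      ultimately show ?thesis using eta by linarith
    qed
    finally show "norm (q n - w) < \<epsilon>" .
  qed
qed

lemma HB_ineq:
  fixes f :: "'a::real_normed_vector \<Rightarrow> 'b::real_normed_vector"
  assumes nt: "\<exists>x::'a. x \<noteq> 0" and f0: "f 0 = 0" and L: "L \<ge> 0"
    and fL: "\<And>x y. norm (f x - f y) \<le> L * norm (x - y)" and F: "finite F"
  shows "norm (\<Sum>x\<in>F. c x *\<^sub>R f x) \<le> L * dual_norm (psi F c)"
proof -
  define v where "v = (\<Sum>x\<in>F. c x *\<^sub>R f x)"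
  obtain ll where l: "linear ll" "ll v = norm v" "\<forall>y\<in>span (insert v (f ` F)). \<bar>ll y\<bar> \<le> norm y"
    using HB_finite[of "f ` F" v] F by blast
  have inspan: "f x \<in> span (insert v (f ` F))" if "x \<in> insert 0 F" for x
  proof (cases "x = 0")
    case True then show ?thesis using f0 by (simp add: span_zero)
  next
    case False then have "x \<in> F" using that by simp
    then show ?thesis by (intro span_base) simp
  qed
  have hL: "\<bar>ll (f x) - ll (f y)\<bar> \<le> L * norm (x - y)" if "x \<in> insert 0 F" "y \<in> insert 0 F" for x y
  proof -
    have "ll (f x) - ll (f y) = ll (f x - f y)" using l(1) by (simp add: linear_diff)
    moreover have "f x - f y \<in> span (insert v (f ` F))" using inspan that by (simp add: span_diff)
    ultimately have "\<bar>ll (f x) - ll (f y)\<bar> \<le> norm (f x - f y)" using l(3) by simp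
    also have "\<dots> \<le> L * norm (x - y)" by (rule fL)
    finally show ?thesis .
  qed
  have h0: "ll (f 0) = 0" using f0 l(1) by (simp add: linear_0)
  have "(\<Sum>x\<in>F. c x * ll (f x)) \<le> dual_norm (psi F c) * L"
    by (rule mcshane_sum[OF nt F, of "\<lambda>x. ll (f x)", OF h0 L hL])
  moreover have "(\<Sum>x\<in>F. c x * ll (f x)) = ll v"
    unfolding v_def using l(1) by (simp add: linear_sum linear_cmul)
  ultimately show ?thesis using l(2) by (simp add: v_def mult.commute)
qed

definition rep :: "('a::real_normed_vector fn) \<Rightarrow> nat \<Rightarrow> 'a set \<times> ('a \<Rightarrow> real)" where
  "rep \<phi> k = (SOME p. finite (fst p) \<and> dual_norm (\<lambda>g. \<phi> g - psi (fst p) (snd p) g) < inverse (real (Suc k)))"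

lemma rep_prop:
  assumes "\<phi> \<in> free_space"
  shows "finite (fst (rep \<phi> k))" "dual_norm (\<lambda>g. \<phi> g - psi (fst (rep \<phi> k)) (snd (rep \<phi> k)) g) < inverse (real (Suc k))"
proof -
  have "\<exists>F c. finite F \<and> dual_norm (\<lambda>g. \<phi> g - psi F c g) < inverse (real (Suc k))"
    using free_spaceD(2)[OF assms] by simp
  then have "\<exists>p. finite (fst p) \<and> dual_norm (\<lambda>g. \<phi> g - psi (fst p) (snd p) g) < inverse (real (Suc k))" by auto
  from someI_ex[OF this] show "finite (fst (rep \<phi> k))" "dual_norm (\<lambda>g. \<phi> g - psi (fst (rep \<phi> k)) (snd (rep \<phi> k)) g) < inverse (real (Suc k))"
    unfolding rep_def by blast+
qed

definition Lf :: "('a \<Rightarrow> 'b::real_vector) \<Rightarrow> 'a set \<Rightarrow> ('a \<Rightarrow> real) \<Rightarrow> 'b" where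
  "Lf f A a = (\<Sum>x\<in>A. a x *\<^sub>R f x)"

definition Tf :: "('a::real_normed_vector \<Rightarrow> 'b::real_normed_vector) \<Rightarrow> 'a fn \<Rightarrow> 'b" where
  "Tf f \<phi> = lim (\<lambda>k. Lf f (fst (rep \<phi> k)) (snd (rep \<phi> k)))"

lemma Lf_comb:
  assumes "finite A" "finite B"
  shows "a *\<^sub>R Lf f A a1 + b *\<^sub>R Lf f B b1 = Lf f (A \<union> B) (\<lambda>x. a * ext0 A a1 x + b * ext0 B b1 x)"
proof -
  have fU: "finite (A \<union> B)" using assms by simp
  have "Lf f (A \<union> B) (\<lambda>x. a * ext0 A a1 x + b * ext0 B b1 x)
      = a *\<^sub>R (\<Sum>x\<in>A \<union> B. ext0 A a1 x *\<^sub>R f x) + b *\<^sub>R (\<Sum>x\<in>A \<union> B. ext0 B b1 x *\<^sub>R f x)"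
    by (simp add: Lf_def sum.distrib scaleR_sum_right scaleR_add_left)
  also have "\<dots> = a *\<^sub>R Lf f A a1 + b *\<^sub>R Lf f B b1"
    using sum_ext0[OF fU, of A a1 f] sum_ext0[OF fU, of B b1 f] by (simp add: Lf_def)
  finally show ?thesis by simp
qed

locale lin =
  fixes f :: "'a::real_normed_vector \<Rightarrow> 'b::banach" and L :: real
  assumes nt: "\<exists>x::'a. x \<noteq> 0" and f0: "f 0 = 0" and L: "L \<ge> 0"
    and fL: "\<And>x y. norm (f x - f y) \<le> L * norm (x - y)"
begin

lemma DL:
  assumes ph: "\<phi> \<in> Lip0_dual" and A: "finite A" and B: "finite B"
  shows "norm (Lf f A a - Lf f B b) \<le> L * (dual_norm (\<lambda>g. \<phi> g - psi A a g) + dual_norm (\<lambda>g. \<phi> g - psi B b g))"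
proof -
  let ?d = "\<lambda>x. 1 * ext0 A a x + (-1) * ext0 B b x"
  have e1: "Lf f A a - Lf f B b = Lf f (A \<union> B) ?d" using Lf_comb[OF A B, of 1 f a "-1" b] by simp
  have n1: "norm (Lf f (A \<union> B) ?d) \<le> L * dual_norm (psi (A \<union> B) ?d)"
    unfolding Lf_def using HB_ineq[OF nt f0 L fL] A B by simp
  have e2: "psi (A \<union> B) ?d = (\<lambda>g. 1 * (\<phi> g - psi B b g) + (-1) * (\<phi> g - psi A a g))"
    using psi_comb[OF A B, of 1 a _ "-1" b] by (auto simp: algebra_simps)
  have d1: "dual_norm (\<lambda>g. 1 * (\<phi> g - psi B b g) + (-1) * (\<phi> g - psi A a g)) \<le> \<bar>1\<bar> * dual_norm (\<lambda>g. \<phi> g - psi B b g) + \<bar>-1\<bar> * dual_norm (\<lambda>g. \<phi> g - psi A a g)"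
    by (rule dual_tri[OF nt dual_diff[OF ph psi_dual[OF B]] dual_diff[OF ph psi_dual[OF A]]])
  have "L * dual_norm (psi (A \<union> B) ?d) \<le> L * (dual_norm (\<lambda>g. \<phi> g - psi B b g) + dual_norm (\<lambda>g. \<phi> g - psi A a g))"
    using d1 L unfolding e2 by (intro mult_left_mono) auto
  then show ?thesis using e1 n1 by (simp add: algebra_simps)
qed

lemma inv_Suc_tendsto: "(\<lambda>k. inverse (real (Suc k))) \<longlonglongrightarrow> 0"
  using LIMSEQ_inverse_real_of_nat .

lemma conv:
  assumes ph: "\<phi> \<in> free_space" and F: "\<And>k. finite (F k)"
    and dn: "(\<lambda>k. dual_norm (\<lambda>g. \<phi> g - psi (F k) (c k) g)) \<longlonglongrightarrow> 0"
  shows "(\<lambda>k. Lf f (F k) (c k)) \<longlonglongrightarrow> Tf f \<phi>"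
proof -
  define s where "s k = Lf f (fst (rep \<phi> k)) (snd (rep \<phi> k))" for k
  have pd: "\<phi> \<in> Lip0_dual" using free_spaceD(1)[OF ph] .
  note rp = rep_prop[OF ph]
  have sd: "norm (s m - s n) \<le> L * (inverse (real (Suc m)) + inverse (real (Suc n)))" for m n
  proof -
    have "norm (s m - s n) \<le> L * (dual_norm (\<lambda>g. \<phi> g - psi (fst (rep \<phi> m)) (snd (rep \<phi> m)) g)
        + dual_norm (\<lambda>g. \<phi> g - psi (fst (rep \<phi> n)) (snd (rep \<phi> n)) g))"
      unfolding s_def by (rule DL[OF pd rp(1) rp(1)])
    also have "\<dots> \<le> L * (inverse (real (Suc m)) + inverse (real (Suc n)))"
      using rp(2)[of m] rp(2)[of n] L by (intro mult_left_mono) auto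
    finally show ?thesis .
  qed
  have "Cauchy s"
  proof (rule CauchyI)
    fix e :: real assume e: "e > 0"
    have e2: "e / (2 * L + 2) > 0" using e L by simp
    obtain N where N: "N > 0" "inverse (real N) < e / (2 * L + 2)" using ex_inverse_of_nat_less[OF e2] by auto
    have N2: "inverse (real N) * (2 * L + 2) < e" using N(2) L by (simp add: pos_less_divide_eq)
    show "\<exists>M. \<forall>m\<ge>M. \<forall>n\<ge>M. norm (s m - s n) < e"
    proof (intro exI allI impI)
      fix m n assume mn: "N \<le> m" "N \<le> n"
      have im: "inverse (real (Suc m)) \<le> inverse (real N)" using mn N(1) by (intro le_imp_inverse_le) auto
      have inn: "inverse (real (Suc n)) \<le> inverse (real N)" using mn N(1) by (intro le_imp_inverse_le) auto
      have "norm (s m - s n) \<le> L * (inverse (real (Suc m)) + inverse (real (Suc n)))" by (rule sd)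
      also have "\<dots> \<le> (L + 1) * (2 * inverse (real N))"
        using im inn L by (intro mult_mono) auto
      also have "\<dots> = inverse (real N) * (2 * L + 2)" by (simp add: algebra_simps)
      finally show "norm (s m - s n) < e" using N2 by linarith
    qed
  qed
  then have "convergent s" by (rule Cauchy_convergent)
  then have sT: "s \<longlonglongrightarrow> Tf f \<phi>" unfolding Tf_def s_def[abs_def] by (simp add: convergent_LIMSEQ_iff)
  have "(\<lambda>k. Lf f (F k) (c k) - s k) \<longlonglongrightarrow> 0"
  proof (rule Lim_null_comparison)
    show "\<forall>\<^sub>F k in sequentially. norm (Lf f (F k) (c k) - s k) \<le> L * (dual_norm (\<lambda>g. \<phi> g - psi (F k) (c k) g) + inverse (real (Suc k)))"
    proof (intro always_eventually allI)
      fix k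
      have "norm (Lf f (F k) (c k) - s k) \<le> L * (dual_norm (\<lambda>g. \<phi> g - psi (F k) (c k) g)
          + dual_norm (\<lambda>g. \<phi> g - psi (fst (rep \<phi> k)) (snd (rep \<phi> k)) g))"
        unfolding s_def by (rule DL[OF pd F rp(1)])
      also have "\<dots> \<le> L * (dual_norm (\<lambda>g. \<phi> g - psi (F k) (c k) g) + inverse (real (Suc k)))"
        using rp(2)[of k] L by (intro mult_left_mono) auto
      finally show "norm (Lf f (F k) (c k) - s k) \<le> L * (dual_norm (\<lambda>g. \<phi> g - psi (F k) (c k) g) + inverse (real (Suc k)))" .
    qed
    show "(\<lambda>k. L * (dual_norm (\<lambda>g. \<phi> g - psi (F k) (c k) g) + inverse (real (Suc k)))) \<longlonglongrightarrow> 0"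
      using tendsto_mult[OF tendsto_const[of L] tendsto_add[OF dn inv_Suc_tendsto]] by simp
  qed
  from tendsto_add[OF this sT] show ?thesis by simp
qed

lemma rep_conv:
  fixes \<phi> :: "'a fn"
  assumes ph: "\<phi> \<in> free_space"
  shows "(\<lambda>k. dual_norm (\<lambda>g. \<phi> g - psi (fst (rep \<phi> k)) (snd (rep \<phi> k)) g)) \<longlonglongrightarrow> 0"
proof (rule tendsto_sandwich[OF _ _ tendsto_const inv_Suc_tendsto])
  have "0 \<le> dual_norm (\<lambda>g. \<phi> g - psi (fst (rep \<phi> k)) (snd (rep \<phi> k)) g)" for k
  proof -
    have "(\<lambda>g. \<phi> g - psi (fst (rep \<phi> k)) (snd (rep \<phi> k)) g) \<in> Lip0_dual"
      by (rule dual_diff[OF free_spaceD(1)[OF ph] psi_dual[OF rep_prop(1)[OF ph, of k]]])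
    then show ?thesis by (rule dual_nonneg[OF nt])
  qed
  then show "\<forall>\<^sub>F k in sequentially. 0 \<le> dual_norm (\<lambda>g. \<phi> g - psi (fst (rep \<phi> k)) (snd (rep \<phi> k)) g)"
    by simp
  show "\<forall>\<^sub>F k in sequentially. dual_norm (\<lambda>g. \<phi> g - psi (fst (rep \<phi> k)) (snd (rep \<phi> k)) g) \<le> inverse (real (Suc k))"
    using rep_prop(2)[OF ph] by (intro always_eventually allI less_imp_le)
qed

lemma Tf_lim:
  assumes ph: "\<phi> \<in> free_space"
  shows "(\<lambda>k. Lf f (fst (rep \<phi> k)) (snd (rep \<phi> k))) \<longlonglongrightarrow> Tf f \<phi>"
  by (rule conv[OF ph rep_prop(1)[OF ph] rep_conv[OF ph]])

lemma Tf_comb: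
  assumes ph: "\<phi> \<in> free_space" and ps: "\<psi> \<in> free_space"
  shows "Tf f (\<lambda>g. a * \<phi> g + b * \<psi> g) = a *\<^sub>R Tf f \<phi> + b *\<^sub>R Tf f \<psi>"
proof -
  define A where "A k = fst (rep \<phi> k)" for k
  define a1 where "a1 k = snd (rep \<phi> k)" for k
  define B where "B k = fst (rep \<psi> k)" for k
  define b1 where "b1 k = snd (rep \<psi> k)" for k
  have A: "finite (A k)" for k using rep_prop(1)[OF ph] by (simp add: A_def)
  have B: "finite (B k)" for k using rep_prop(1)[OF ps] by (simp add: B_def)
  define F where "F k = A k \<union> B k" for k
  define c where "c k = (\<lambda>x. a * ext0 (A k) (a1 k) x + b * ext0 (B k) (b1 k) x)" for k
  have F: "finite (F k)" for k using A B by (simp add: F_def)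
  have comb: "(\<lambda>g. a * \<phi> g + b * \<psi> g) \<in> free_space" by (rule free_comb[OF nt ph ps])
  have eqf: "(\<lambda>g. a * \<phi> g + b * \<psi> g - psi (F k) (c k) g) = (\<lambda>g. a * (\<phi> g - psi (A k) (a1 k) g) + b * (\<psi> g - psi (B k) (b1 k) g))" for k
    using psi_comb[OF A[of k] B[of k], of a "a1 k" _ b "b1 k", symmetric] by (auto simp: F_def c_def algebra_simps)
  have dn: "(\<lambda>k. dual_norm (\<lambda>g. a * \<phi> g + b * \<psi> g - psi (F k) (c k) g)) \<longlonglongrightarrow> 0"
  proof (rule tendsto_sandwich[OF _ _ tendsto_const])
    show "\<forall>\<^sub>F k in sequentially. 0 \<le> dual_norm (\<lambda>g. a * \<phi> g + b * \<psi> g - psi (F k) (c k) g)"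
      using dual_nonneg[OF nt dual_diff[OF free_spaceD(1)[OF comb] psi_dual[OF F]]] by simp
    show "\<forall>\<^sub>F k in sequentially. dual_norm (\<lambda>g. a * \<phi> g + b * \<psi> g - psi (F k) (c k) g)
        \<le> \<bar>a\<bar> * dual_norm (\<lambda>g. \<phi> g - psi (A k) (a1 k) g) + \<bar>b\<bar> * dual_norm (\<lambda>g. \<psi> g - psi (B k) (b1 k) g)"
      unfolding eqf
      by (intro always_eventually allI dual_tri[OF nt dual_diff[OF free_spaceD(1)[OF ph] psi_dual[OF A]] dual_diff[OF free_spaceD(1)[OF ps] psi_dual[OF B]]])
    show "(\<lambda>k. \<bar>a\<bar> * dual_norm (\<lambda>g. \<phi> g - psi (A k) (a1 k) g) + \<bar>b\<bar> * dual_norm (\<lambda>g. \<psi> g - psi (B k) (b1 k) g)) \<longlonglongrightarrow> 0"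
      using tendsto_add[OF tendsto_mult[OF tendsto_const rep_conv[OF ph]] tendsto_mult[OF tendsto_const rep_conv[OF ps]], of "\<bar>a\<bar>" "\<bar>b\<bar>"]
      by (simp add: A_def a1_def B_def b1_def)
  qed
  have l1: "(\<lambda>k. Lf f (F k) (c k)) \<longlonglongrightarrow> Tf f (\<lambda>g. a * \<phi> g + b * \<psi> g)" by (rule conv[OF comb F dn])
  have "(\<lambda>k. a *\<^sub>R Lf f (A k) (a1 k) + b *\<^sub>R Lf f (B k) (b1 k)) \<longlonglongrightarrow> a *\<^sub>R Tf f \<phi> + b *\<^sub>R Tf f \<psi>"
    using Tf_lim[OF ph] Tf_lim[OF ps] unfolding A_def a1_def B_def b1_def by (intro tendsto_intros)
  moreover have "(\<lambda>k. a *\<^sub>R Lf f (A k) (a1 k) + b *\<^sub>R Lf f (B k) (b1 k)) = (\<lambda>k. Lf f (F k) (c k))"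
    by (simp add: Lf_comb[OF A B] F_def c_def)
  ultimately show ?thesis using l1 LIMSEQ_unique by metis
qed

lemma Tf_bound:
  assumes ph: "\<phi> \<in> free_space"
  shows "norm (Tf f \<phi>) \<le> L * dual_norm \<phi>"
proof -
  have pd: "\<phi> \<in> Lip0_dual" using free_spaceD(1)[OF ph] .
  have bnd: "norm (Lf f (fst (rep \<phi> k)) (snd (rep \<phi> k))) \<le> L * (dual_norm \<phi> + inverse (real (Suc k)))" for k
  proof -
    let ?A = "fst (rep \<phi> k)" and ?a = "snd (rep \<phi> k)"
    have A: "finite ?A" using rep_prop(1)[OF ph] .
    have "norm (Lf f ?A ?a) \<le> L * dual_norm (psi ?A ?a)"
      unfolding Lf_def by (rule HB_ineq[OF nt f0 L fL A])
    also have "psi ?A ?a = (\<lambda>g. 1 * \<phi> g + (-1) * (\<phi> g - psi ?A ?a g))" by auto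
    also have "dual_norm \<dots> \<le> \<bar>1\<bar> * dual_norm \<phi> + \<bar>-1\<bar> * dual_norm (\<lambda>g. \<phi> g - psi ?A ?a g)"
      by (rule dual_tri[OF nt pd dual_diff[OF pd psi_dual[OF A]]])
    also have "\<dots> \<le> dual_norm \<phi> + inverse (real (Suc k))" using rep_prop(2)[OF ph, of k] by simp
    finally show ?thesis using L by (simp add: mult_left_mono)
  qed
  have "(\<lambda>k. norm (Lf f (fst (rep \<phi> k)) (snd (rep \<phi> k)))) \<longlonglongrightarrow> norm (Tf f \<phi>)"
    by (intro tendsto_intros Tf_lim[OF ph])
  moreover have "(\<lambda>k. L * (dual_norm \<phi> + inverse (real (Suc k)))) \<longlonglongrightarrow> L * (dual_norm \<phi> + 0)"
    by (intro tendsto_intros inv_Suc_tendsto)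
  ultimately have "norm (Tf f \<phi>) \<le> L * (dual_norm \<phi> + 0)" using bnd by (intro LIMSEQ_le) auto
  then show ?thesis by simp
qed

lemma Tf_delta: "Tf f (delta x) = f x"
proof -
  have d: "delta x \<in> free_space" by (rule delta_free[OF nt])
  have "dual_norm (\<lambda>g. delta x g - psi {x} (\<lambda>_. 1) g) = 0"
    using dual_zero[OF nt] by (simp add: delta_psi)
  then have "(\<lambda>k. dual_norm (\<lambda>g. delta x g - psi {x} (\<lambda>_. 1) g)) \<longlonglongrightarrow> 0" by (simp only: tendsto_const)
  from conv[OF d _ this] have "(\<lambda>k. Lf f {x} (\<lambda>_. 1)) \<longlonglongrightarrow> Tf f (delta x)" by simp
  then have "(\<lambda>k. f x) \<longlonglongrightarrow> Tf f (delta x)" by (simp add: Lf_def)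
  then show ?thesis using LIMSEQ_unique tendsto_const by metis
qed

lemma Tf_bo: "Tf f \<in> bounded_ops"
proof -
  have "Tf f (\<lambda>g. \<phi> g + \<psi> g) = Tf f \<phi> + Tf f \<psi>" if "\<phi> \<in> free_space" "\<psi> \<in> free_space" for \<phi> \<psi>
    using Tf_comb[OF that, of 1 1] by simp
  moreover have "Tf f (\<lambda>g. c * \<phi> g) = c *\<^sub>R Tf f \<phi>" if "\<phi> \<in> free_space" for c \<phi>
    using Tf_comb[OF that that, of c 0] by simp
  moreover have "\<exists>K. \<forall>\<phi>\<in>free_space. norm (Tf f \<phi>) \<le> K * dual_norm \<phi>"
    using Tf_bound by blast
  ultimately show ?thesis unfolding bounded_ops_def by blast
qed

end

lemma pair_lemma:
  fixes S :: "'a::real_normed_vector fn \<Rightarrow> 'b::real_normed_vector"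
  assumes nt: "\<exists>x::'a. x \<noteq> 0" and S: "S \<in> bounded_ops"
    and p0: "\<phi>0 \<in> free_space" "dual_norm \<phi>0 = 1"
    and wM: "norm (S \<phi>0) = M" and Mp: "M > 0"
    and eta: "\<eta> > 0"
  shows "\<exists>x y. x \<noteq> y \<and> norm ((1 / norm (x - y)) *\<^sub>R (S (delta x) - S (delta y)) + S \<phi>0) \<ge> 2 * M - \<eta>"
proof (rule ccontr)
  define g where "g x = S (delta x)" for x
  define w where "w = S \<phi>0"
  assume "\<not> ?thesis"
  then have H: "norm ((1 / norm (x - y)) *\<^sub>R (g x - g y) + w) < 2 * M - \<eta>" if "x \<noteq> y" for x y
    using that by (auto simp: g_def w_def not_le)
  define \<eta>' where "\<eta>' = min \<eta> M"
  have e': "\<eta>' > 0" "\<eta>' \<le> M" "\<eta>' \<le> \<eta>" using eta Mp by (auto simp: \<eta>'_def)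
  obtain K where K: "K \<ge> 0" "\<forall>\<phi>\<in>free_space. norm (S \<phi>) \<le> K * dual_norm \<phi>" using boK[OF nt S] by blast
  define \<delta> where "\<delta> = \<eta>' / (2 * (K + M + 1))"
  have dp: "\<delta> > 0" using e' K Mp by (simp add: \<delta>_def)
  obtain F c where F: "finite F" and Fc: "dual_norm (\<lambda>g. \<phi>0 g - psi F c g) < \<delta>"
    using free_spaceD(2)[OF p0(1) dp] by blast
  define v where "v = (\<Sum>x\<in>F. c x *\<^sub>R g x)"
  have Sv: "S (psi F c) = v" unfolding v_def g_def by (rule bo_psi[OF nt S F])
  obtain ll where l: "linear ll" "ll w = norm w" "\<forall>y\<in>span (insert w (g ` F)). \<bar>ll y\<bar> \<le> norm y"
    using HB_finite[of "g ` F" w] F by blast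
  have g0: "g 0 = 0" unfolding g_def by (rule bo_delta0[OF nt S])
  have inspan: "g x \<in> span (insert w (g ` F))" if "x \<in> insert 0 F" for x
  proof (cases "x = 0")
    case True then show ?thesis using g0 by (simp add: span_zero)
  next
    case False then have "x \<in> F" using that by simp
    then show ?thesis by (intro span_base) simp
  qed
  have wsp: "w \<in> span (insert w (g ` F))" by (simp add: span_base)
  have lw: "ll w = M" using l(2) wM by (simp add: w_def)
  have one: "ll (g x) - ll (g y) < (M - \<eta>') * norm (x - y)" if xy: "x \<in> insert 0 F" "y \<in> insert 0 F" "x \<noteq> y" for x y
  proof -
    define d where "d = norm (x - y)"
    have d: "d > 0" using xy by (simp add: d_def)
    define q where "q = (1 / d) *\<^sub>R (g x - g y)"
    have "q + w \<in> span (insert w (g ` F))" unfolding q_def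
      using inspan[OF xy(1)] inspan[OF xy(2)] wsp by (intro span_add span_scale span_diff)
    then have "ll (q + w) \<le> norm (q + w)" using l(3) by fastforce
    also have "\<dots> < 2 * M - \<eta>'" using H[OF xy(3)] e' by (simp add: q_def d_def)
    finally have "ll (q + w) < 2 * M - \<eta>'" .
    moreover have "ll (q + w) = (ll (g x) - ll (g y)) / d + M"
      using l(1) lw by (simp add: q_def linear_add linear_cmul linear_diff diff_divide_distrib)
    ultimately have "(ll (g x) - ll (g y)) / d < M - \<eta>'" by simp
    then show ?thesis using d by (simp add: d_def pos_divide_less_eq mult.commute)
  qed
  have hL: "\<bar>ll (g x) - ll (g y)\<bar> \<le> (M - \<eta>') * norm (x - y)" if "x \<in> insert 0 F" "y \<in> insert 0 F" for x y
  proof (cases "x = y")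
    case True then show ?thesis by simp
  next
    case False
    have "ll (g x) - ll (g y) < (M - \<eta>') * norm (x - y)" using one that False by blast
    moreover have "ll (g y) - ll (g x) < (M - \<eta>') * norm (y - x)" using one that False by metis
    ultimately show ?thesis by (simp add: norm_minus_commute abs_less_iff)
  qed
  have h0: "ll (g 0) = 0" using g0 l(1) by (simp add: linear_0)
  have Ml: "M - \<eta>' \<ge> 0" using e' by simp
  have mc: "(\<Sum>x\<in>F. c x * ll (g x)) \<le> dual_norm (psi F c) * (M - \<eta>')"
    by (rule mcshane_sum[OF nt F, of "\<lambda>x. ll (g x)", OF h0 Ml hL])
  have llv: "(\<Sum>x\<in>F. c x * ll (g x)) = ll v"
    unfolding v_def using l(1) by (simp add: linear_sum linear_cmul)
  have vsp: "v \<in> span (insert w (g ` F))" unfolding v_def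
    using inspan by (intro span_sum span_scale) auto
  have wv: "w - v \<in> span (insert w (g ` F))" using vsp wsp by (rule span_diff[rotated])
  have "ll w - ll v = ll (w - v)" using l(1) by (simp add: linear_diff)
  also have "\<dots> \<le> norm (w - v)" using l(3) wv by fastforce
  also have "w - v = S (\<lambda>g. \<phi>0 g - psi F c g)"
    using bo_sub[OF nt S p0(1) psi_free[OF nt F]] Sv by (simp add: w_def)
  also have "norm \<dots> \<le> K * dual_norm (\<lambda>g. \<phi>0 g - psi F c g)"
    using K(2) free_diff[OF nt p0(1) psi_free[OF nt F]] by blast
  also have "\<dots> \<le> K * \<delta>" using Fc K(1) by (intro mult_left_mono) auto
  finally have low: "M - K * \<delta> \<le> ll v" using lw by simp
  have pd: "\<phi>0 \<in> Lip0_dual" using free_spaceD(1)[OF p0(1)] .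
  have "psi F c = (\<lambda>g. 1 * \<phi>0 g + (-1) * (\<phi>0 g - psi F c g))" by auto
  then have "dual_norm (psi F c) \<le> \<bar>1\<bar> * dual_norm \<phi>0 + \<bar>-1\<bar> * dual_norm (\<lambda>g. \<phi>0 g - psi F c g)"
    using dual_tri[OF nt pd dual_diff[OF pd psi_dual[OF F]], of 1 "-1"] by simp
  then have dpsi: "dual_norm (psi F c) \<le> 1 + \<delta>" using Fc p0(2) by simp
  have "ll v \<le> (1 + \<delta>) * (M - \<eta>')" using mc llv dpsi Ml by (metis mult_right_mono order_trans)
  with low have "M - K * \<delta> \<le> (1 + \<delta>) * (M - \<eta>')" by linarith
  then have "\<eta>' \<le> \<delta> * (K + M) - \<delta> * \<eta>'" by (simp add: algebra_simps)
  also have "\<dots> \<le> \<delta> * (K + M)" using dp e' by simp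
  also have "\<delta> * (K + M) < \<eta>'"
  proof -
    have "\<delta> * (K + M) = \<eta>' * ((K + M) / (2 * (K + M + 1)))" by (simp add: \<delta>_def)
    also have "(K + M) / (2 * (K + M + 1)) < 1" using K Mp by (simp add: divide_less_eq)
    then have "\<eta>' * ((K + M) / (2 * (K + M + 1))) < \<eta>' * 1" using e' by (intro mult_strict_left_mono) auto
    finally show ?thesis by simp
  qed
  finally show False by simp
qed

lemma DA_lemma:
  fixes S :: "'a::real_normed_vector fn \<Rightarrow> 'b::banach" and B :: "'a set"
  assumes nt: "\<exists>x::'a. x \<noteq> 0" and B: "finite B" "span B = UNIV" and uc: "uniformly_convex TYPE('b)"
    and S: "S \<in> bounded_ops" and p0: "\<phi>0 \<in> free_space" "dual_norm \<phi>0 = 1" "norm (S \<phi>0) = op_norm S"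
  shows "(\<lambda>x. S (delta x)) \<in> DA"
proof -
  define g where "g x = S (delta x)" for x
  define M where "M = op_norm S"
  define w where "w = S \<phi>0"
  have wM: "norm w = M" using p0 by (simp add: w_def M_def)
  have M0: "M \<ge> 0" using wM by auto
  have gL: "norm (g x - g y) \<le> M * norm (x - y)" for x y
  proof (cases "x = y")
    case True then show ?thesis by simp
  next
    case False
    have d: "norm (x - y) > 0" using False by simp
    have "norm ((1 / norm (x - y)) *\<^sub>R (g x - g y)) \<le> M"
      unfolding g_def M_def by (rule bo_quot[OF nt S False])
    then have "norm (g x - g y) / norm (x - y) \<le> M" by simp
    then show ?thesis using d by (simp add: pos_divide_le_eq mult.commute)
  qed
  have g0: "g 0 = 0" unfolding g_def by (rule bo_delta0[OF nt S])
  have gLip: "g \<in> Lip0" by (rule Lip0I[OF g0 M0 gL])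
  have lipg: "lip_norm g \<le> M" by (rule lip_le[OF nt gL])
  have lipg0: "lip_norm g \<ge> 0" by (rule lip_nonneg[OF nt gL])
  have qle: "norm ((1 / norm (x - y)) *\<^sub>R (g x - g y)) \<le> lip_norm g" if "x \<noteq> y" for x y
    using lip_quot_le[OF gL that] by simp
  have "\<exists>u z xs ys. norm u = 1 \<and> norm z = lip_norm g \<and> (\<forall>n. xs n \<noteq> ys n) \<and>
      ((\<lambda>n. (1 / norm (xs n - ys n)) *\<^sub>R (g (xs n) - g (ys n))) \<longlonglongrightarrow> z) \<and>
      ((\<lambda>n. (1 / norm (xs n - ys n)) *\<^sub>R (xs n - ys n)) \<longlonglongrightarrow> u)"
  proof (cases "M = 0")
    case True
    obtain x0 :: 'a where x0: "x0 \<noteq> 0" using nt by blast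
    have lg: "lip_norm g = 0" using lipg lipg0 True by simp
    have gx0: "g x0 = 0" using gL[of x0 0] True g0 by simp
    show ?thesis
      by (intro exI[of _ "(1 / norm x0) *\<^sub>R x0"] exI[of _ 0] exI[of _ "\<lambda>n. x0"] exI[of _ "\<lambda>n. 0"])
         (use x0 lg gx0 g0 in auto)
  next
    case False
    then have Mp: "M > 0" using M0 by simp
    have "\<forall>n. \<exists>x y. x \<noteq> y \<and> norm ((1 / norm (x - y)) *\<^sub>R (g x - g y) + w) \<ge> 2 * M - 1 / real (Suc n)"
    proof
      fix n
      have "(1 / real (Suc n)) > 0" by simp
      from pair_lemma[OF nt S p0(1) p0(2) _ Mp this] wM show "\<exists>x y. x \<noteq> y \<and> norm ((1 / norm (x - y)) *\<^sub>R (g x - g y) + w) \<ge> 2 * M - 1 / real (Suc n)"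
        by (simp add: g_def w_def)
    qed
    then obtain X Y where XY: "\<forall>n. X n \<noteq> Y n" "\<forall>n. norm ((1 / norm (X n - Y n)) *\<^sub>R (g (X n) - g (Y n)) + w) \<ge> 2 * M - 1 / real (Suc n)"
      by metis
    define q where "q n = (1 / norm (X n - Y n)) *\<^sub>R (g (X n) - g (Y n))" for n
    have qM: "norm (q n) \<le> M" for n using qle[of "X n" "Y n"] XY(1) lipg by (simp add: q_def)
    have qw: "norm (q n + w) \<ge> 2 * M - 1 / Suc n" for n using XY(2) by (simp add: q_def)
    have qc: "q \<longlonglongrightarrow> w" by (rule uc_conv[OF uc Mp wM qM qw])
    define u where "u n = (1 / norm (X n - Y n)) *\<^sub>R (X n - Y n)" for n
    have un: "\<forall>n. norm (u n) = 1" using XY(1) by (simp add: u_def)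
    obtain r u0 where r: "strict_mono r" "norm u0 = 1" "(u \<circ> r) \<longlonglongrightarrow> u0"
      using unit_seq_subconv[OF B un] by blast
    have qr: "(q \<circ> r) \<longlonglongrightarrow> w" using LIMSEQ_subseq_LIMSEQ[OF qc r(1)] .
    have "(\<lambda>n. norm (q n)) \<longlonglongrightarrow> norm w" by (intro tendsto_intros qc)
    moreover have "\<forall>n\<ge>0. norm (q n) \<le> lip_norm g" using qle XY(1) by (simp add: q_def)
    ultimately have "norm w \<le> lip_norm g" by (intro LIMSEQ_le_const2) auto
    then have lgM: "lip_norm g = M" using lipg wM by simp
    have c2: "norm w = lip_norm g" using lgM wM by simp
    have c3: "\<forall>n. (X \<circ> r) n \<noteq> (Y \<circ> r) n" using XY(1) by simp
    have c4: "(\<lambda>n. (1 / norm ((X \<circ> r) n - (Y \<circ> r) n)) *\<^sub>R (g ((X \<circ> r) n) - g ((Y \<circ> r) n))) \<longlonglongrightarrow> w"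
      using qr by (simp add: q_def o_def)
    have c5: "(\<lambda>n. (1 / norm ((X \<circ> r) n - (Y \<circ> r) n)) *\<^sub>R ((X \<circ> r) n - (Y \<circ> r) n)) \<longlonglongrightarrow> u0"
      using r(3) by (simp add: u_def o_def)
    show ?thesis
      apply (rule exI[of _ u0], rule exI[of _ w], rule exI[of _ "X \<circ> r"], rule exI[of _ "Y \<circ> r"])
      using r(2) c2 c3 c4 c5 by blast
  qed
  then have "g \<in> DA" using gLip unfolding DA_def by blast
  then show ?thesis by (simp add: g_def[abs_def])
qed

theorem corollary3p10:
  assumes finite_dim: "\<exists>B::'a::banach set. finite B \<and> span B = UNIV"
    and nontrivial: "\<exists>x::'a. x \<noteq> 0"
    and unif_convex: "uniformly_convex TYPE('b::banach)"
    and NA_dense: "\<forall>T\<in>(bounded_ops :: ((('a \<Rightarrow> real) \<Rightarrow> real) \<Rightarrow> 'b) set). \<forall>\<epsilon>>0.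
        \<exists>S\<in>norm_attaining. op_norm (\<lambda>\<phi>. T \<phi> - S \<phi>) < \<epsilon>"
  shows "\<forall>f\<in>(Lip0 :: ('a \<Rightarrow> 'b) set). \<forall>\<epsilon>>0. \<exists>g\<in>DA. lip_norm (\<lambda>x. f x - g x) < \<epsilon>"
proof (intro ballI allI impI)
  fix f :: "'a \<Rightarrow> 'b" and \<epsilon> :: real
  assume f: "f \<in> Lip0" and e: "\<epsilon> > 0"
  obtain B :: "'a set" where B: "finite B" "span B = UNIV" using finite_dim by blast
  obtain C where C: "C \<ge> 0" "\<forall>x y. norm (f x - f y) \<le> C * norm (x - y)" using Lip0D(2)[OF f] by blast
  interpret lin f C
    by unfold_locales (use nontrivial Lip0D(1)[OF f] C in auto)
  have Tbo: "Tf f \<in> bounded_ops" by (rule Tf_bo)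
  obtain S where S: "S \<in> norm_attaining" and Sd: "op_norm (\<lambda>\<phi>. Tf f \<phi> - S \<phi>) < \<epsilon>"
    using NA_dense Tbo e by blast
  have Sbo: "S \<in> bounded_ops" using S by (simp add: norm_attaining_def)
  obtain \<phi>0 where p0: "\<phi>0 \<in> free_space" "dual_norm \<phi>0 = 1" "norm (S \<phi>0) = op_norm S"
    using S by (auto simp: norm_attaining_def)
  have gDA: "(\<lambda>x. S (delta x)) \<in> DA" by (rule DA_lemma[OF nontrivial B unif_convex Sbo p0])
  have Dbo: "(\<lambda>\<phi>. Tf f \<phi> - S \<phi>) \<in> bounded_ops" by (rule bo_diff[OF Tbo Sbo])
  have "lip_norm (\<lambda>x. f x - S (delta x)) \<le> op_norm (\<lambda>\<phi>. Tf f \<phi> - S \<phi>)"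
  proof (rule lip_le[OF nontrivial])
    fix x y :: 'a
    show "norm ((f x - S (delta x)) - (f y - S (delta y))) \<le> op_norm (\<lambda>\<phi>. Tf f \<phi> - S \<phi>) * norm (x - y)"
    proof (cases "x = y")
      case True then show ?thesis by simp
    next
      case False
      have d: "norm (x - y) > 0" using False by simp
      have "norm ((1 / norm (x - y)) *\<^sub>R ((Tf f (delta x) - S (delta x)) - (Tf f (delta y) - S (delta y))))
          \<le> op_norm (\<lambda>\<phi>. Tf f \<phi> - S \<phi>)"
        using bo_quot[OF nontrivial Dbo False] by simp
      then have "norm ((f x - S (delta x)) - (f y - S (delta y))) / norm (x - y) \<le> op_norm (\<lambda>\<phi>. Tf f \<phi> - S \<phi>)"
        by (simp add: Tf_delta)
      then show ?thesis using d by (simp add: pos_divide_le_eq mult.commute)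
    qed
  qed
  then have "lip_norm (\<lambda>x. f x - S (delta x)) < \<epsilon>" using Sd by simp
  then show "\<exists>g\<in>DA. lip_norm (\<lambda>x. f x - g x) < \<epsilon>"
    using gDA by (intro bexI[of _ "\<lambda>x. S (delta x)"]) simp_all
qed

end
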